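(* Let $\alpha>0$ and let $\omega:[0,1]\to\mathbb R$ be a function that is continuous on $[0,1]$, nondecreasing, satisfies $\omega(\delta)\ne0$ for all $\delta\in(0,1]$ and $\omega(\delta)\to0$ as $\delta\to0+$, and satisfies condition $(\mathcal B_\alpha)$: $\sum_{v=1}^n v^{\alpha-1}\omega(v^{-1})=\mathcal O(n^\alpha\omega(n^{-1}))$ as $n\to\infty$. Let $\|\cdot\|$ be either the Luxemburg norm $\|\cdot\|_{\mathbf M}$ or the Orlicz norm $\|\cdot\|^*_{\mathbf M}$ (the same choice throughout). Then a function $f\in\mathcal S_{\mathbf M}$ satisfies $\omega_\alpha(f,\delta)=\mathcal O(\omega(\delta))$ as $\delta\to0+$ if and only if $E_n(f)=\mathcal O(\omega(n^{-1}))$ as $n\to\infty$.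
   Context: $L$ is the space of $2\pi$-periodic Lebesgue integrable functions, with Fourier coefficients $\widehat f(k)=(2\pi)^{-1}\int_0^{2\pi}f(x)e^{-\mathrm{i}kx}\,dx$. Let $\mathbf M=\{M_k\}_{k\in\mathbb Z}$ be a sequence of Orlicz functions on $[0,\infty)$ (nondecreasing, convex, $M_k(0)=0$, $M_k(u)\to\infty$ as $u\to\infty$). For a complex sequence $c=\{c_k\}_{k\in\mathbb Z}$: Luxemburg norm $\|c\|_{\mathbf M}=\inf\{a>0:\sum_kM_k(|c_k|/a)\le1\}$; with $\tilde M_k(v)=\sup\{uv-M_k(u):u\ge0\}$ and $\Lambda$ the set of positive sequences $\lambda$ with $\sum_k\tilde M_k(\lambda_k)\le1$, Orlicz norm $\|c\|^*_{\mathbf M}=\sup\{\sum_k\lambda_k|c_k|:\lambda\in\Lambda\}$. $\mathcal S_{\mathbf M}$ is the space of $f\in L$ with $\|\{\widehat f(k)\}\|_{\mathbf M}<\infty$; norms of $f$ are those of $\{\widehat f(k)\}$. $E_n(f)=\inf\{\|f-t\|:t\in\mathcal T_{n-1}\}$, $\mathcal T_{n-1}$ the trigonometric polynomials $\sum_{|k|\le n-1}c_ke^{\mathrm{i}kx}$. For $\alpha>0$, $\Delta_h^\alpha f(x)=\sum_{j\ge0}(-1)^j\binom{\alpha}{j}f(x-jh)$, with Fourier coefficients $(1-e^{-\mathrm{i}kh})^\alpha\widehat f(k)$, and $\omega_\alpha(f,\delta)=\sup_{|h|\le\delta}\|\Delta_h^\alpha f\|$. *)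

theory Defs
  imports "HOL-Analysis.Analysis" "HOL-Library.Landau_Symbols"
begin

definition Lper :: "(real \<Rightarrow> complex) set" where
  "Lper = {f. (\<forall>x. f (x + 2 * pi) = f x) \<and> f absolutely_integrable_on {0..2 * pi}}"

definition fourier_coeff :: "(real \<Rightarrow> complex) \<Rightarrow> int \<Rightarrow> complex" where
  "fourier_coeff f k =
     complex_of_real (1 / (2 * pi)) * integral {0..2 * pi} (\<lambda>x. f x * cis (- (of_int k * x)))"

definition orlicz_function :: "(real \<Rightarrow> real) \<Rightarrow> bool" where
  "orlicz_function M \<longleftrightarrow> mono_on {0..} M \<and> convex_on {0..} M \<and> M 0 = 0
     \<and> filterlim M at_top at_top"

text \<open>Luxemburg norm (value \<infinity> if no admissible a exists).\<close>
definition lux_norm :: "(int \<Rightarrow> real \<Rightarrow> real) \<Rightarrow> (int \<Rightarrow> complex) \<Rightarrow> ennreal" where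
  "lux_norm Ms c = Inf {ennreal a | a. a > 0 \<and>
      (\<Sum>\<^sub>\<infinity>k. ennreal (Ms k (norm (c k) / a))) \<le> 1}"

definition compl_fun :: "(real \<Rightarrow> real) \<Rightarrow> real \<Rightarrow> ennreal" where
  "compl_fun M v = (SUP u\<in>{0..}. ennreal (u * v - M u))"

definition Lambda_set :: "(int \<Rightarrow> real \<Rightarrow> real) \<Rightarrow> (int \<Rightarrow> real) set" where
  "Lambda_set Ms = {lam. (\<forall>k. lam k > 0) \<and> (\<Sum>\<^sub>\<infinity>k. compl_fun (Ms k) (lam k)) \<le> 1}"

definition orlicz_norm :: "(int \<Rightarrow> real \<Rightarrow> real) \<Rightarrow> (int \<Rightarrow> complex) \<Rightarrow> ennreal" where
  "orlicz_norm Ms c = (SUP lam\<in>Lambda_set Ms. (\<Sum>\<^sub>\<infinity>k. ennreal (lam k * norm (c k))))"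

definition S_M :: "(int \<Rightarrow> real \<Rightarrow> real) \<Rightarrow> (real \<Rightarrow> complex) set" where
  "S_M Ms = {f \<in> Lper. lux_norm Ms (fourier_coeff f) < \<infinity>}"

definition trig_polys :: "int \<Rightarrow> (real \<Rightarrow> complex) set" where
  "trig_polys m = {t. \<exists>c. \<forall>x. t x = (\<Sum>k\<in>{-m..m}. c k * cis (of_int k * x))}"

definition best_approx ::
  "((int \<Rightarrow> complex) \<Rightarrow> ennreal) \<Rightarrow> nat \<Rightarrow> (real \<Rightarrow> complex) \<Rightarrow> ennreal" where
  "best_approx N n f = Inf {N (fourier_coeff (\<lambda>x. f x - t x)) | t. t \<in> trig_polys (int n - 1)}"

definition frac_diff :: "real \<Rightarrow> real \<Rightarrow> (real \<Rightarrow> complex) \<Rightarrow> real \<Rightarrow> complex" where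
  "frac_diff \<alpha> h f x =
     (\<Sum>j. complex_of_real ((-1) ^ j * (\<alpha> gchoose j)) * f (x - real j * h))"

definition modulus_smooth ::
  "((int \<Rightarrow> complex) \<Rightarrow> ennreal) \<Rightarrow> real \<Rightarrow> (real \<Rightarrow> complex) \<Rightarrow> real \<Rightarrow> ennreal" where
  "modulus_smooth N \<alpha> f \<delta> = (SUP h\<in>{h. \<bar>h\<bar> \<le> \<delta>}. N (fourier_coeff (frac_diff \<alpha> h f)))"

end

theory Submission
  imports Defs
begin

lemma enn_infsum_SUP: "(\<Sum>\<^sub>\<infinity>k\<in>A. (f k :: ennreal)) = (SUP F\<in>{F. finite F \<and> F \<subseteq> A}. sum f F)"
  by (rule nonneg_infsum_complete) simp

lemma enn_infsum_le_iff: "(\<Sum>\<^sub>\<infinity>k. (f k :: ennreal)) \<le> B \<longleftrightarrow> (\<forall>F. finite F \<longrightarrow> sum f F \<le> B)"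
  unfolding enn_infsum_SUP by (auto simp: SUP_le_iff)

lemma enn_sum_le_infsum: "finite F \<Longrightarrow> sum f F \<le> (\<Sum>\<^sub>\<infinity>k. (f k :: ennreal))"
  using enn_infsum_le_iff[of f "\<Sum>\<^sub>\<infinity>k. f k"] by auto

lemma enn_infsum_mono: "(\<And>k. f k \<le> g k) \<Longrightarrow> (\<Sum>\<^sub>\<infinity>k. (f k :: ennreal)) \<le> (\<Sum>\<^sub>\<infinity>k. g k)"
  by (rule infsum_mono) (auto intro: nonneg_summable_on_complete)

lemma enn_infsum_add: "(\<Sum>\<^sub>\<infinity>k. (f k + g k :: ennreal)) = (\<Sum>\<^sub>\<infinity>k. f k) + (\<Sum>\<^sub>\<infinity>k. g k)"
  by (rule infsum_add) (auto intro: nonneg_summable_on_complete)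

lemma enn_infsum_cmult: "(\<Sum>\<^sub>\<infinity>k. (c * f k :: ennreal)) = c * (\<Sum>\<^sub>\<infinity>k. f k)"
  unfolding enn_infsum_SUP SUP_mult_left_ennreal by (simp add: sum_distrib_left)

section \<open>Orlicz functions\<close>

lemma orl_nonneg: "orlicz_function M \<Longrightarrow> 0 \<le> u \<Longrightarrow> 0 \<le> M u"
  unfolding orlicz_function_def mono_on_def by (metis atLeast_iff order_refl)

lemma orl_mono: "orlicz_function M \<Longrightarrow> 0 \<le> u \<Longrightarrow> u \<le> v \<Longrightarrow> M u \<le> M v"
  unfolding orlicz_function_def mono_on_def by (metis atLeast_iff order_trans)

lemma orl_convex: "orlicz_function M \<Longrightarrow> 0 \<le> t \<Longrightarrow> t \<le> 1 \<Longrightarrow> 0 \<le> u \<Longrightarrow> 0 \<le> v \<Longrightarrow>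
   M ((1 - t) * u + t * v) \<le> (1 - t) * M u + t * M v"
  unfolding orlicz_function_def using convex_onD[of "{0..}" M t u v] by auto

lemma orl_scale: "orlicz_function M \<Longrightarrow> 0 \<le> t \<Longrightarrow> t \<le> 1 \<Longrightarrow> 0 \<le> u \<Longrightarrow> M (t * u) \<le> t * M u"
  using orl_convex[of M t 0 u] unfolding orlicz_function_def by auto

section \<open>Luxemburg norm\<close>

definition ladm :: "(int \<Rightarrow> real \<Rightarrow> real) \<Rightarrow> (int \<Rightarrow> complex) \<Rightarrow> real \<Rightarrow> bool" where
  "ladm Ms c a \<longleftrightarrow> a > 0 \<and> (\<Sum>\<^sub>\<infinity>k. ennreal (Ms k (norm (c k) / a))) \<le> 1"

lemma lux_norm_alt: "lux_norm Ms c = Inf {ennreal a | a. ladm Ms c a}"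
  unfolding lux_norm_def ladm_def by simp

lemma lux_le: "ladm Ms c a \<Longrightarrow> lux_norm Ms c \<le> ennreal a"
  unfolding lux_norm_alt by (auto intro: Inf_lower)

lemma ladm_mono:
  assumes orl: "\<And>k. orlicz_function (Ms k)" and le: "\<And>k. norm (c k) \<le> norm (d k)"
    and ad: "ladm Ms d b" and ab: "b \<le> a"
  shows "ladm Ms c a"
proof -
  have b0: "b > 0" using ad by (simp add: ladm_def)
  have "ennreal (Ms k (norm (c k) / a)) \<le> ennreal (Ms k (norm (d k) / b))" for k
  proof -
    have "norm (c k) / a \<le> norm (d k) / b"
      using le[of k] b0 ab by (meson frac_le norm_ge_zero order_trans)
    then show ?thesis using orl_mono[OF orl] b0 ab by (simp add: ennreal_leI)
  qed
  then have "(\<Sum>\<^sub>\<infinity>k. ennreal (Ms k (norm (c k) / a))) \<le> (\<Sum>\<^sub>\<infinity>k. ennreal (Ms k (norm (d k) / b)))"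
    by (rule enn_infsum_mono)
  then show ?thesis using ad b0 ab unfolding ladm_def by auto
qed

lemma lux_lt:
  assumes orl: "\<And>k. orlicz_function (Ms k)" and lt: "lux_norm Ms c < ennreal a"
  shows "ladm Ms c a"
proof -
  from lt obtain x where "x \<in> {ennreal a | a. ladm Ms c a}" "x < ennreal a"
    unfolding lux_norm_alt Inf_less_iff by blast
  then obtain b where b: "ladm Ms c b" "ennreal b < ennreal a" by auto
  then have "b \<le> a" using ennreal_less_iff[of b a] by (auto simp: ladm_def)
  then show ?thesis using ladm_mono[OF orl _ b(1)] by auto
qed

lemma lux_mono:
  assumes orl: "\<And>k. orlicz_function (Ms k)" and le: "\<And>k. norm (c k) \<le> norm (d k)"
  shows "lux_norm Ms c \<le> lux_norm Ms d"
  unfolding lux_norm_alt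
  by (rule Inf_superset_mono) (use ladm_mono[OF orl le] in fastforce)

lemma enn_dense2:
  assumes "\<And>a b. x < ennreal a \<Longrightarrow> y < ennreal b \<Longrightarrow> z \<le> ennreal (a + b)"
  shows "z \<le> x + y"
proof (cases "x = \<infinity> \<or> y = \<infinity>")
  case True then show ?thesis by auto
next
  case False
  then obtain x' y' where xy: "x = ennreal x'" "y = ennreal y'" "x' \<ge> 0" "y' \<ge> 0"
    by (metis ennreal_cases infinity_ennreal_def)
  show ?thesis
  proof (rule ennreal_le_epsilon)
    fix e :: real assume e: "0 < e"
    have "z \<le> ennreal ((x' + e/2) + (y' + e/2))"
      by (rule assms) (use xy e in \<open>auto simp: ennreal_less_iff\<close>)
    also have "\<dots> = x + y + ennreal e" using xy e by (simp flip: ennreal_plus)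
    finally show "z \<le> x + y + ennreal e" .
  qed
qed

lemma enn_dense1:
  assumes "\<And>a. x < ennreal a \<Longrightarrow> z \<le> ennreal (r * a)" and r: "r > 0"
  shows "z \<le> ennreal r * x"
proof (cases "x = \<infinity>")
  case True
  then show ?thesis using r by (simp add: ennreal_mult_top)
next
  case False
  then obtain x' where xy: "x = ennreal x'" "x' \<ge> 0"
    by (metis ennreal_cases infinity_ennreal_def)
  show ?thesis
  proof (rule ennreal_le_epsilon)
    fix e :: real assume e: "0 < e"
    have "z \<le> ennreal (r * (x' + e / (r + 1)))"
      by (rule assms) (use xy e r in \<open>auto simp: ennreal_less_iff\<close>)
    also have "\<dots> \<le> ennreal (r * x' + e)"
    proof -
      have "r * (e / (r + 1)) \<le> e" using r e by (simp add: field_simps)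
      then show ?thesis by (intro ennreal_leI) (simp add: algebra_simps)
    qed
    also have "\<dots> = ennreal r * x + ennreal e" using xy e r by (simp add: ennreal_mult ennreal_plus[symmetric])
    finally show "z \<le> ennreal r * x + ennreal e" .
  qed
qed

lemma ladm_add:
  assumes orl: "\<And>k. orlicz_function (Ms k)" and A: "ladm Ms c a" and B: "ladm Ms d b"
  shows "ladm Ms (\<lambda>k. c k + d k) (a + b)"
proof -
  have a0: "a > 0" and b0: "b > 0" using A B by (auto simp: ladm_def)
  define t where "t = b / (a + b)"
  have t: "0 \<le> t" "t \<le> 1" "1 - t = a / (a + b)" using a0 b0 by (auto simp: t_def field_simps)
  have pt: "ennreal (Ms k (norm (c k + d k) / (a + b))) \<le>
      ennreal (1 - t) * ennreal (Ms k (norm (c k) / a)) + ennreal t * ennreal (Ms k (norm (d k) / b))" for k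
  proof -
    have "norm (c k + d k) / (a + b) \<le> (1 - t) * (norm (c k) / a) + t * (norm (d k) / b)"
    proof -
      have "(1 - t) * (norm (c k) / a) + t * (norm (d k) / b) = (norm (c k) + norm (d k)) / (a + b)"
      proof -
        have e1: "a / (a + b) * (norm (c k) / a) = norm (c k) / (a + b)" using a0 b0 by simp
        have e2: "b / (a + b) * (norm (d k) / b) = norm (d k) / (a + b)" using a0 b0 by simp
        show ?thesis by (simp only: t(3) e1 e2[folded t_def] add_divide_distrib)
      qed
      moreover have "norm (c k + d k) / (a + b) \<le> (norm (c k) + norm (d k)) / (a + b)"
        using a0 b0 norm_triangle_ineq[of "c k" "d k"] by (intro divide_right_mono) auto
      ultimately show ?thesis by simp
    qed
    then have "Ms k (norm (c k + d k) / (a + b)) \<le> Ms k ((1 - t) * (norm (c k) / a) + t * (norm (d k) / b))"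
      using orl_mono[OF orl] a0 b0 by simp
    also have "\<dots> \<le> (1 - t) * Ms k (norm (c k) / a) + t * Ms k (norm (d k) / b)"
      by (rule orl_convex[OF orl]) (use t a0 b0 in auto)
    finally show ?thesis using t orl_nonneg[OF orl] a0 b0
      by (simp add: ennreal_leI flip: ennreal_mult ennreal_plus)
  qed
  have "(\<Sum>\<^sub>\<infinity>k. ennreal (Ms k (norm (c k + d k) / (a + b)))) \<le>
      (\<Sum>\<^sub>\<infinity>k. ennreal (1 - t) * ennreal (Ms k (norm (c k) / a)) + ennreal t * ennreal (Ms k (norm (d k) / b)))"
    by (rule enn_infsum_mono[OF pt])
  also have "\<dots> = ennreal (1 - t) * (\<Sum>\<^sub>\<infinity>k. ennreal (Ms k (norm (c k) / a))) + ennreal t * (\<Sum>\<^sub>\<infinity>k. ennreal (Ms k (norm (d k) / b)))"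
    by (simp add: enn_infsum_add enn_infsum_cmult)
  also have "\<dots> \<le> ennreal (1 - t) * 1 + ennreal t * 1"
    using A B unfolding ladm_def by (intro add_mono mult_left_mono) auto
  also have "\<dots> = 1" using t by (simp flip: ennreal_plus)
  finally show ?thesis using a0 b0 by (simp add: ladm_def)
qed

lemma lux_add:
  assumes orl: "\<And>k. orlicz_function (Ms k)"
  shows "lux_norm Ms (\<lambda>k. c k + d k) \<le> lux_norm Ms c + lux_norm Ms d"
proof (rule enn_dense2)
  fix a b assume "lux_norm Ms c < ennreal a" "lux_norm Ms d < ennreal b"
  then have "ladm Ms c a" "ladm Ms d b" using lux_lt[OF orl] by auto
  then show "lux_norm Ms (\<lambda>k. c k + d k) \<le> ennreal (a + b)"
    by (intro lux_le ladm_add[OF orl])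
qed

lemma lux_scale:
  assumes orl: "\<And>k. orlicz_function (Ms k)" and r: "r > 0"
  shows "lux_norm Ms (\<lambda>k. of_real r * c k) \<le> ennreal r * lux_norm Ms c"
proof (rule enn_dense1)
  fix a assume "lux_norm Ms c < ennreal a"
  then have A: "ladm Ms c a" by (rule lux_lt[OF orl])
  then have "ladm Ms (\<lambda>k. of_real r * c k) (r * a)" using r
    by (simp add: ladm_def norm_mult)
  then show "lux_norm Ms (\<lambda>k. of_real r * c k) \<le> ennreal (r * a)" by (rule lux_le)
qed (use r in auto)

lemma lux_zero:
  assumes orl: "\<And>k. orlicz_function (Ms k)"
  shows "lux_norm Ms (\<lambda>k. 0) = 0"
proof -
  have M0: "Ms k 0 = 0" for k using orl[of k] unfolding orlicz_function_def by blast
  have "ladm Ms (\<lambda>k. 0) a" if "a > 0" for a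
    unfolding ladm_def using that M0 by simp
  then have *: "lux_norm Ms (\<lambda>k. 0) \<le> ennreal a" if "a > 0" for a using that lux_le by blast
  have "lux_norm Ms (\<lambda>k. 0) \<le> 0"
  proof (rule ennreal_le_epsilon)
    fix e :: real assume "0 < e" then show "lux_norm Ms (\<lambda>k. 0) \<le> 0 + ennreal e" using *[of e] by simp
  qed
  then show ?thesis by simp
qed


section \<open>Orlicz norm\<close>

lemma orlicz_mono:
  assumes le: "\<And>k. norm (c k) \<le> norm (d k)"
  shows "orlicz_norm Ms c \<le> orlicz_norm Ms d"
  unfolding orlicz_norm_def
proof (rule SUP_subset_mono[OF order_refl])
  fix lam assume "lam \<in> Lambda_set Ms"
  then have "lam k > 0" for k by (simp add: Lambda_set_def)
  then show "(\<Sum>\<^sub>\<infinity>k. ennreal (lam k * norm (c k))) \<le> (\<Sum>\<^sub>\<infinity>k. ennreal (lam k * norm (d k)))"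
    by (intro enn_infsum_mono ennreal_leI mult_left_mono le) (auto simp: less_imp_le)
qed

lemma orlicz_add: "orlicz_norm Ms (\<lambda>k. c k + d k) \<le> orlicz_norm Ms c + orlicz_norm Ms d"
  unfolding orlicz_norm_def
proof (rule SUP_least)
  fix lam assume lam: "lam \<in> Lambda_set Ms"
  then have l0: "lam k > 0" for k by (simp add: Lambda_set_def)
  have "(\<Sum>\<^sub>\<infinity>k. ennreal (lam k * norm (c k + d k))) \<le>
        (\<Sum>\<^sub>\<infinity>k. ennreal (lam k * norm (c k)) + ennreal (lam k * norm (d k)))"
  proof (rule enn_infsum_mono)
    fix k
    have "lam k * norm (c k + d k) \<le> lam k * norm (c k) + lam k * norm (d k)"
      using l0[of k] norm_triangle_ineq[of "c k" "d k"] by (simp add: distrib_left[symmetric] less_imp_le)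
    then show "ennreal (lam k * norm (c k + d k)) \<le> ennreal (lam k * norm (c k)) + ennreal (lam k * norm (d k))"
      using l0[of k] by (simp add: ennreal_leI ennreal_plus[symmetric] less_imp_le del: ennreal_plus)
  qed
  also have "\<dots> = (\<Sum>\<^sub>\<infinity>k. ennreal (lam k * norm (c k))) + (\<Sum>\<^sub>\<infinity>k. ennreal (lam k * norm (d k)))"
    by (rule enn_infsum_add)
  also have "\<dots> \<le> (SUP lam\<in>Lambda_set Ms. \<Sum>\<^sub>\<infinity>k. ennreal (lam k * norm (c k))) +
                   (SUP lam\<in>Lambda_set Ms. \<Sum>\<^sub>\<infinity>k. ennreal (lam k * norm (d k)))"
    using lam by (intro add_mono SUP_upper)
  finally show "(\<Sum>\<^sub>\<infinity>k. ennreal (lam k * norm (c k + d k))) \<le> \<dots>" .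
qed

lemma orlicz_scale:
  assumes r: "r > 0"
  shows "orlicz_norm Ms (\<lambda>k. of_real r * c k) \<le> ennreal r * orlicz_norm Ms c"
  unfolding orlicz_norm_def
proof (rule SUP_least)
  fix lam assume lam: "lam \<in> Lambda_set Ms"
  then have l0: "lam k > 0" for k by (simp add: Lambda_set_def)
  have "(\<Sum>\<^sub>\<infinity>k. ennreal (lam k * norm (of_real r * c k))) = (\<Sum>\<^sub>\<infinity>k. ennreal r * ennreal (lam k * norm (c k)))"
    using l0 r by (intro infsum_cong) (simp add: norm_mult ennreal_mult[symmetric] less_imp_le mult_ac)
  also have "\<dots> = ennreal r * (\<Sum>\<^sub>\<infinity>k. ennreal (lam k * norm (c k)))" by (rule enn_infsum_cmult)
  also have "\<dots> \<le> ennreal r * (SUP lam\<in>Lambda_set Ms. \<Sum>\<^sub>\<infinity>k. ennreal (lam k * norm (c k)))"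
    using lam by (intro mult_left_mono SUP_upper) auto
  finally show "(\<Sum>\<^sub>\<infinity>k. ennreal (lam k * norm (of_real r * c k))) \<le> \<dots>" .
qed

lemma orlicz_zero: "orlicz_norm Ms (\<lambda>k. 0) = 0"
  unfolding orlicz_norm_def by (cases "Lambda_set Ms = {}") (auto simp: bot_ennreal)

lemma young_enn:
  assumes M: "orlicz_function M" and u: "u \<ge> 0"
  shows "ennreal (u * v) \<le> ennreal (M u) + compl_fun M v"
proof -
  have "ennreal (u * v - M u) \<le> compl_fun M v"
    unfolding compl_fun_def using u by (intro SUP_upper) auto
  moreover have "ennreal (u * v) \<le> ennreal (M u) + ennreal (u * v - M u)"
  proof (cases "u * v - M u \<ge> 0")
    case True
    then show ?thesis using orl_nonneg[OF M u] by (simp add: ennreal_plus[symmetric] del: ennreal_plus)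
  next
    case False
    then have "ennreal (u * v) \<le> ennreal (M u)" by (intro ennreal_leI) simp
    then show ?thesis by (simp add: add_increasing2)
  qed
  ultimately show ?thesis by (meson add_left_mono order_trans)
qed

lemma orlicz_le_ladm:
  assumes orl: "\<And>k. orlicz_function (Ms k)" and A: "ladm Ms c a"
  shows "orlicz_norm Ms c \<le> ennreal (2 * a)"
  unfolding orlicz_norm_def
proof (rule SUP_least)
  fix lam assume lam: "lam \<in> Lambda_set Ms"
  then have l0: "lam k > 0" for k by (simp add: Lambda_set_def)
  have a0: "a > 0" using A by (simp add: ladm_def)
  have "(\<Sum>\<^sub>\<infinity>k. ennreal (lam k * norm (c k))) \<le>
     (\<Sum>\<^sub>\<infinity>k. ennreal a * (ennreal (Ms k (norm (c k) / a)) + compl_fun (Ms k) (lam k)))"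
  proof (rule enn_infsum_mono)
    fix k
    have "ennreal (lam k * norm (c k)) = ennreal a * ennreal ((norm (c k) / a) * lam k)"
      using a0 l0[of k] by (simp add: ennreal_mult[symmetric] less_imp_le)
    also have "\<dots> \<le> ennreal a * (ennreal (Ms k (norm (c k) / a)) + compl_fun (Ms k) (lam k))"
      using a0 by (intro mult_left_mono young_enn[OF orl]) auto
    finally show "ennreal (lam k * norm (c k)) \<le> \<dots>" .
  qed
  also have "\<dots> = ennreal a * ((\<Sum>\<^sub>\<infinity>k. ennreal (Ms k (norm (c k) / a))) + (\<Sum>\<^sub>\<infinity>k. compl_fun (Ms k) (lam k)))"
    by (simp add: enn_infsum_cmult enn_infsum_add)
  also have "\<dots> \<le> ennreal a * (1 + 1)"
    using A lam unfolding ladm_def Lambda_set_def by (intro mult_left_mono add_mono) auto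
  also have "\<dots> = ennreal (2 * a)" using a0 by (simp add: ennreal_mult mult.commute)
  finally show "(\<Sum>\<^sub>\<infinity>k. ennreal (lam k * norm (c k))) \<le> ennreal (2 * a)" .
qed

lemma orlicz_le_lux:
  assumes orl: "\<And>k. orlicz_function (Ms k)"
  shows "orlicz_norm Ms c \<le> ennreal 2 * lux_norm Ms c"
  by (rule enn_dense1) (use orlicz_le_ladm[OF orl] lux_lt[OF orl] in auto)

definition s1 :: real where "s1 = 1 - sin 1"

lemma s1_pos: "0 < s1" and s1_le: "s1 \<le> 1"
proof -
  have "sin (1::real) < sin (pi/2)"
    using pi_gt3 by (subst sin_mono_less_eq) auto
  then show "0 < s1" by (simp add: s1_def)
  have "0 \<le> sin (1::real)" by (rule sin_ge_zero) (use pi_gt3 in auto)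
  then show "s1 \<le> 1" by (simp add: s1_def)
qed

lemma x_minus_sin_mono: "1 \<le> x \<Longrightarrow> sin x \<le> x - s1"
proof -
  assume x: "1 \<le> x"
  have "(\<lambda>t. t - sin t) 1 \<le> (\<lambda>t. t - sin t) x"
    by (rule DERIV_nonneg_imp_nondecreasing[OF x])
       (auto intro!: derivative_eq_intros exI[of _ "1 - cos _"] simp: cos_le_one)
  then show ?thesis by (simp add: s1_def)
qed

lemma sin_div_bound: "1 \<le> x \<Longrightarrow> sin x / x \<le> 1 - s1 / 2"
proof -
  assume x: "1 \<le> x"
  show ?thesis
  proof (cases "x \<le> 2")
    case True
    have "sin x / x \<le> (x - s1) / x" using x x_minus_sin_mono[OF x] by (simp add: divide_right_mono)
    also have "\<dots> = 1 - s1 / x" using x by (simp add: field_simps)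
    also have "\<dots> \<le> 1 - s1 / 2"
    proof -
      have "s1 / 2 \<le> s1 / x" using True x s1_pos by (intro divide_left_mono) auto
      then show ?thesis by simp
    qed
    finally show ?thesis .
  next
    case False
    have "sin x / x \<le> 1 / x" using x by (simp add: divide_right_mono)
    also have "\<dots> \<le> 1 / 2" using False by simp
    also have "\<dots> \<le> 1 - s1 / 2" using s1_le by simp
    finally show ?thesis .
  qed
qed

lemma sin_sq_has_integral:
  fixes k :: int and b :: real
  assumes k: "k \<noteq> 0" and b: "0 \<le> b"
  shows "((\<lambda>h. sin (k * h / 2) ^ 2) has_integral (b / 2 - sin (k * b) / (2 * k))) {0..b}"
proof -
  have "((\<lambda>h. sin (k * h / 2) ^ 2) has_integral ((\<lambda>h::real. h / 2 - sin (of_int k * h) / (2 * of_int k)) b - (\<lambda>h::real. h / 2 - sin (of_int k * h) / (2 * of_int k)) 0)) {0..b}"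
  proof (rule fundamental_theorem_of_calculus[OF b])
    fix x :: real assume "x \<in> {0..b}"
    have "((\<lambda>h::real. h / 2 - sin (of_int k * h) / (2 * of_int k)) has_real_derivative (1 / 2 - cos (k * x) * k / (2 * k))) (at x within {0..b})"
      by (auto intro!: derivative_eq_intros)
    moreover have "1 / 2 - cos (k * x) * k / (2 * k) = sin (k * x / 2) ^ 2"
    proof -
      have "cos (k * x) = cos (2 * (k * x / 2))" by simp
      also have "\<dots> = 1 - 2 * sin (k * x / 2) ^ 2" by (rule cos_double_sin)
      finally show ?thesis using k by (simp add: field_simps)
    qed
    ultimately show "((\<lambda>h::real. h / 2 - sin (of_int k * h) / (2 * of_int k)) has_vector_derivative sin (k * x / 2) ^ 2) (at x within {0..b})"
      by (simp add: has_real_derivative_iff_has_vector_derivative)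
  qed
  then show ?thesis by simp
qed

lemma sin_sq_integral_lower:
  fixes k :: int and n :: real
  assumes n: "1 \<le> n" and kn: "n \<le> \<bar>k\<bar>"
  shows "integral {0..1/n} (\<lambda>h. sin (k * h / 2) ^ 2) \<ge> s1 / (4 * n)"
proof -
  have k: "k \<noteq> 0" using n kn by auto
  have I: "integral {0..1/n} (\<lambda>h. sin (k * h / 2) ^ 2) = 1/(2*n) - sin (k / n) / (2 * k)"
    using integral_unique[OF sin_sq_has_integral[OF k, of "1/n"]] n by simp
  define x where "x = \<bar>k\<bar> / n"
  have x1: "1 \<le> x" using n kn by (simp add: x_def)
  have "sin (k / n) / (2 * k) = (sin x / x) / (2 * n)"
  proof (cases "k > 0")
    case True then show ?thesis using n by (simp add: x_def field_simps)
  next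
    case False
    then have "\<bar>k\<bar> = - k" by simp
    then show ?thesis using n k by (simp add: x_def field_simps)
  qed
  also have "\<dots> \<le> (1 - s1 / 2) / (2 * n)" by (intro divide_right_mono) (use sin_div_bound[OF x1] n in auto)
  finally have "sin (k / n) / (2 * k) \<le> (1 - s1 / 2) / (2 * n)" .
  then have "1/(2*n) - sin (k / n) / (2 * k) \<ge> 1/(2*n) - (1 - s1 / 2) / (2 * n)" by simp
  moreover have "1/(2*n) - (1 - s1 / 2) / (2 * n) = s1 / (4 * n)" using n by (simp add: field_simps)
  ultimately show ?thesis using I by simp
qed


definition mfun :: "real \<Rightarrow> real \<Rightarrow> real" where
  "mfun \<alpha> t = (2 * \<bar>sin (t / 2)\<bar>) powr \<alpha>"

definition gok :: "(real \<Rightarrow> real) \<Rightarrow> bool" where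
  "gok g \<longleftrightarrow> mono_on {0..} g \<and> g 0 = 0 \<and> (\<forall>t u. 0 \<le> t \<longrightarrow> t \<le> 1 \<longrightarrow> 0 \<le> u \<longrightarrow> g (t * u) \<le> t * g u)"

lemma gok_nonneg: "gok g \<Longrightarrow> 0 \<le> u \<Longrightarrow> 0 \<le> g u"
  unfolding gok_def mono_on_def by (metis atLeast_iff order_refl)

lemma gok_mono: "gok g \<Longrightarrow> 0 \<le> u \<Longrightarrow> u \<le> v \<Longrightarrow> g u \<le> g v"
  unfolding gok_def mono_on_def by (metis atLeast_iff order_trans)

lemma gok_measurable:
  assumes g: "gok g" and f: "f \<in> borel_measurable M" and f0: "\<And>x. 0 \<le> f x"
  shows "(\<lambda>x. g (f x)) \<in> borel_measurable M"
proof -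
  have "mono (\<lambda>x. g (max 0 x))"
    by (rule monoI) (auto intro: gok_mono[OF g])
  then have "(\<lambda>x. g (max 0 x)) \<in> borel_measurable borel" by (rule borel_measurable_mono)
  from measurable_compose[OF f this] have "(\<lambda>x. g (max 0 (f x))) \<in> borel_measurable M" .
  moreover have "max 0 (f x) = f x" for x using f0[of x] by simp
  ultimately show ?thesis by simp
qed

definition qq :: real where "qq = s1 / 8"
definition eps :: "real \<Rightarrow> real" where "eps \<alpha> = (2 * sqrt qq) powr \<alpha>"
definition kap :: "real \<Rightarrow> real" where "kap \<alpha> = qq * eps \<alpha>"

lemma qq_pos: "0 < qq" and qq_le: "qq \<le> 1"
  using s1_pos s1_le by (auto simp: qq_def)

lemma kap_pos: "0 < kap \<alpha>"
  using qq_pos by (simp add: kap_def eps_def)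

lemma mfun_nonneg: "0 \<le> mfun \<alpha> t" by (simp add: mfun_def)

lemma mfun_lower:
  assumes a: "\<alpha> > 0" and g: "qq \<le> sin (t / 2) ^ 2"
  shows "eps \<alpha> \<le> mfun \<alpha> t"
proof -
  have "sqrt qq \<le> sqrt (sin (t / 2) ^ 2)" using g by (rule real_sqrt_le_mono)
  then have "sqrt qq \<le> \<bar>sin (t / 2)\<bar>" by simp
  then have "2 * sqrt qq \<le> 2 * \<bar>sin (t / 2)\<bar>" by simp
  then show ?thesis unfolding eps_def mfun_def using a qq_pos by (intro powr_mono2) auto
qed

lemma avg_one:
  fixes G :: "real \<Rightarrow> real" and k :: int and n :: nat and v :: real
  assumes G: "gok G" and v: "0 \<le> v" and n: "1 \<le> n" and kn: "n \<le> \<bar>k\<bar>" and a: "\<alpha> > 0"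
  shows "ennreal (qq / n) * ennreal (G (eps \<alpha> * v)) \<le>
     (\<integral>\<^sup>+h. ennreal (G (mfun \<alpha> (of_int k * h) * v)) * indicator {0..1/n} h \<partial>lborel)"
proof -
  define g where "g h = sin (k * h / 2) ^ 2" for h :: real
  have pt: "ennreal (max 0 (g h - qq)) * ennreal (G (eps \<alpha> * v)) \<le> ennreal (G (mfun \<alpha> (of_int k * h) * v))" for h
  proof (cases "qq \<le> g h")
    case True
    have g1: "g h \<le> 1" by (simp add: g_def abs_square_le_1)
    have "max 0 (g h - qq) * G (eps \<alpha> * v) \<le> 1 * G (eps \<alpha> * v)"
      using g1 qq_pos gok_nonneg[OF G, of "eps \<alpha> * v"] v by (intro mult_right_mono) (auto simp: eps_def)
    also have "\<dots> \<le> G (mfun \<alpha> (of_int k * h) * v)"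
      using mfun_lower[OF a, of "k * h"] True v by (auto simp: g_def intro!: gok_mono[OF G] mult_right_mono simp: eps_def)
    finally show ?thesis using gok_nonneg[OF G, of "eps \<alpha> * v"] v
      by (simp add: ennreal_mult[symmetric] ennreal_leI eps_def)
  next
    case False
    then show ?thesis by simp
  qed
  have meas1: "(\<lambda>h. ennreal (max 0 (g h - qq)) * indicator {0..1/n} h) \<in> borel_measurable lborel"
    unfolding g_def by measurable
  have cont: "continuous_on {0..1/n} (\<lambda>h. max 0 (g h - qq))"
    unfolding g_def by (intro continuous_intros) auto
  have int1: "(\<integral>\<^sup>+h. ennreal (max 0 (g h - qq)) * indicator {0..1/n} h \<partial>lborel) =
      ennreal (integral {0..1/n} (\<lambda>h. max 0 (g h - qq)))"
    by (rule nn_integral_has_integral_lebesgue') (auto intro: integrable_integral integrable_continuous_interval[OF cont])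
  have "integral {0..1/n} (\<lambda>h. g h - qq) \<le> integral {0..1/n} (\<lambda>h. max 0 (g h - qq))"
    by (rule integral_le) (auto intro: integrable_continuous_interval[OF cont] integrable_continuous_interval
         simp: g_def intro!: continuous_intros)
  moreover have "integral {0..1/n} (\<lambda>h. g h - qq) = integral {0..1/n} g - qq / n"
  proof -
    have "integral {0..1/n} (\<lambda>h. g h - qq) = integral {0..1/n} g - integral {0..1/n} (\<lambda>h. qq)"
      by (rule integral_diff) (auto simp: g_def intro!: integrable_continuous_interval continuous_intros)
    then show ?thesis using n by simp
  qed
  moreover have "integral {0..1/n} g \<ge> s1 / (4 * real n)"
    unfolding g_def by (rule sin_sq_integral_lower) (use n kn in auto)
  moreover have "s1 / (4 * real n) = 2 * (qq / n)" by (simp add: qq_def field_simps)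
  ultimately have "integral {0..1/n} (\<lambda>h. max 0 (g h - qq)) \<ge> qq / n"
    by linarith
  then have "ennreal (qq / n) \<le> (\<integral>\<^sup>+h. ennreal (max 0 (g h - qq)) * indicator {0..1/n} h \<partial>lborel)"
    unfolding int1 by (intro ennreal_leI)
  then have "ennreal (qq / n) * ennreal (G (eps \<alpha> * v)) \<le>
      (\<integral>\<^sup>+h. ennreal (max 0 (g h - qq)) * indicator {0..1/n} h \<partial>lborel) * ennreal (G (eps \<alpha> * v))"
    by (rule mult_right_mono) simp
  also have "\<dots> = (\<integral>\<^sup>+h. ennreal (max 0 (g h - qq)) * indicator {0..1/n} h * ennreal (G (eps \<alpha> * v)) \<partial>lborel)"
    by (rule nn_integral_multc[symmetric, OF meas1])
  also have "\<dots> \<le> (\<integral>\<^sup>+h. ennreal (G (mfun \<alpha> (of_int k * h) * v)) * indicator {0..1/n} h \<partial>lborel)"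
  proof (rule nn_integral_mono)
    fix h :: real assume "h \<in> space lborel"
    show "ennreal (max 0 (g h - qq)) * indicator {0..1/n} h * ennreal (G (eps \<alpha> * v)) \<le>
          ennreal (G (mfun \<alpha> (of_int k * h) * v)) * indicator {0..1/n} h"
      using pt[of h] by (cases "h \<in> {0..1/n}") (auto simp: mult_ac)
  qed
  finally show ?thesis .
qed


lemma avg_core:
  fixes G :: "int \<Rightarrow> real \<Rightarrow> real" and u :: "int \<Rightarrow> real" and n :: nat and B :: ennreal
  assumes G: "\<And>k. gok (G k)" and u: "\<And>k. 0 \<le> u k" and n: "1 \<le> n" and a: "\<alpha> > 0"
    and H: "\<And>h. h \<in> {0..1/n} \<Longrightarrow> (\<Sum>\<^sub>\<infinity>k. ennreal (G k (mfun \<alpha> (of_int k * h) * u k))) \<le> B"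
  shows "(\<Sum>\<^sub>\<infinity>k. ennreal (G k (kap \<alpha> * (if n \<le> \<bar>k\<bar> then u k else 0)))) \<le> B"
proof -
  define X where "X k = (if n \<le> \<bar>k\<bar> then ennreal (G k (eps \<alpha> * u k)) else 0)" for k
  define F where "F k h = ennreal (G k (mfun \<alpha> (of_int k * h) * u k)) * indicator {0..1/n} h" for k h
  have Fm: "F k \<in> borel_measurable lborel" for k
    unfolding F_def
    by (intro borel_measurable_times_ennreal measurable_compose[OF _ measurable_ennreal]
              gok_measurable[OF G] borel_measurable_indicator)
       (auto simp: mfun_def u mfun_nonneg intro!: mult_nonneg_nonneg)
  have X1: "ennreal (qq / n) * X k \<le> integral\<^sup>N lborel (F k)" for k
    unfolding X_def F_def using avg_one[OF G u n _ a] by auto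
  have fin: "ennreal (qq / n) * (\<Sum>k\<in>S. X k) \<le> B * ennreal (1 / n)" if S: "finite S" for S
  proof -
    have "ennreal (qq / n) * (\<Sum>k\<in>S. X k) = (\<Sum>k\<in>S. ennreal (qq / n) * X k)"
      by (simp add: sum_distrib_left)
    also have "\<dots> \<le> (\<Sum>k\<in>S. integral\<^sup>N lborel (F k))" by (intro sum_mono X1)
    also have "\<dots> = (\<integral>\<^sup>+h. (\<Sum>k\<in>S. F k h) \<partial>lborel)" by (rule nn_integral_sum[symmetric]) (use Fm in auto)
    also have "\<dots> \<le> (\<integral>\<^sup>+h. B * indicator {0..1/n} h \<partial>lborel)"
    proof (rule nn_integral_mono)
      fix h :: real assume "h \<in> space lborel"
      show "(\<Sum>k\<in>S. F k h) \<le> B * indicator {0..1/n} h"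
      proof (cases "h \<in> {0..1/n}")
        case True
        have "(\<Sum>k\<in>S. F k h) = (\<Sum>k\<in>S. ennreal (G k (mfun \<alpha> (of_int k * h) * u k)))"
          using True by (simp add: F_def)
        also have "\<dots> \<le> (\<Sum>\<^sub>\<infinity>k. ennreal (G k (mfun \<alpha> (of_int k * h) * u k)))"
          by (rule enn_sum_le_infsum[OF S])
        also have "\<dots> \<le> B" by (rule H[OF True])
        finally show ?thesis using True by simp
      next
        case False then show ?thesis by (simp add: F_def)
      qed
    qed
    also have "\<dots> = B * ennreal (1 / n)"
      using n by (simp add: nn_integral_cmult)
    finally show ?thesis .
  qed
  have fin2: "(\<Sum>k\<in>S. ennreal (G k (kap \<alpha> * (if n \<le> \<bar>k\<bar> then u k else 0)))) \<le> B" if S: "finite S" for S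
  proof -
    have "(\<Sum>k\<in>S. ennreal (G k (kap \<alpha> * (if n \<le> \<bar>k\<bar> then u k else 0)))) \<le> (\<Sum>k\<in>S. ennreal qq * X k)"
    proof (rule sum_mono)
      fix k
      show "ennreal (G k (kap \<alpha> * (if n \<le> \<bar>k\<bar> then u k else 0))) \<le> ennreal qq * X k"
      proof (cases "n \<le> \<bar>k\<bar>")
        case True
        have "G k (qq * (eps \<alpha> * u k)) \<le> qq * G k (eps \<alpha> * u k)"
          using G[of k] qq_pos qq_le u[of k] unfolding gok_def by (auto simp: eps_def)
        then have "ennreal (G k (qq * (eps \<alpha> * u k))) \<le> ennreal qq * ennreal (G k (eps \<alpha> * u k))"
          using qq_pos by (subst ennreal_mult'[symmetric]) (auto intro: ennreal_leI)
        then show ?thesis using True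
          by (simp add: X_def kap_def mult.assoc)
      next
        case False
        then show ?thesis using G[of k] by (simp add: X_def gok_def)
      qed
    qed
    also have "\<dots> = ennreal qq * (\<Sum>k\<in>S. X k)" by (simp add: sum_distrib_left)
    also have "\<dots> = ennreal (real n) * (ennreal (qq / n) * (\<Sum>k\<in>S. X k))"
      using n by (simp add: mult.assoc[symmetric] ennreal_mult[symmetric] qq_pos less_imp_le)
    also have "\<dots> \<le> ennreal (real n) * (B * ennreal (1 / n))" by (intro mult_left_mono fin[OF S]) auto
    also have "\<dots> = B" using n
      by (simp add: mult.assoc[symmetric] mult.commute[of "ennreal (real n)"] mult.assoc ennreal_mult[symmetric])
    finally show ?thesis .
  qed
  then show ?thesis unfolding enn_infsum_le_iff by blast
qed


definition tailc :: "nat \<Rightarrow> (int \<Rightarrow> complex) \<Rightarrow> int \<Rightarrow> complex" where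
  "tailc n c k = (if n \<le> \<bar>k\<bar> then c k else 0)"

definition multc :: "real \<Rightarrow> real \<Rightarrow> (int \<Rightarrow> complex) \<Rightarrow> int \<Rightarrow> complex" where
  "multc \<alpha> h c k = of_real (mfun \<alpha> (of_int k * h)) * c k"

lemma lux_jackson:
  assumes orl: "\<And>k. orlicz_function (Ms k)" and n: "1 \<le> n" and a: "\<alpha> > 0"
    and H: "\<And>h. h \<in> {0..1/n} \<Longrightarrow> lux_norm Ms (multc \<alpha> h c) \<le> A"
  shows "lux_norm Ms (tailc n c) \<le> ennreal (1 / kap \<alpha>) * A"
proof (rule enn_dense1)
  show "0 < 1 / kap \<alpha>" using kap_pos by simp
  fix b assume Ab: "A < ennreal b"
  have b0: "b > 0" using Ab by (metis ennreal_le_iff2 leD less_le_not_le linorder_le_less_linear ennreal_eq_0_iff zero_less_iff_neq_zero not_gr_zero)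
  define G where "G k x = Ms k (x / b)" for k x
  have G: "gok (G k)" for k
    unfolding gok_def G_def
  proof (intro conjI allI impI)
    show "mono_on {0..} (\<lambda>x. Ms k (x / b))"
      using b0 by (auto intro!: mono_onI orl_mono[OF orl] divide_right_mono)
    show "Ms k (0 / b) = 0" using orl[of k] by (simp add: orlicz_function_def)
    fix t u :: real assume "0 \<le> t" "t \<le> 1" "0 \<le> u"
    then show "Ms k (t * u / b) \<le> t * Ms k (u / b)"
      using orl_scale[OF orl, of t "u / b" k] b0 by (simp add: mult_divide_mult_cancel_left_if times_divide_eq_right)
  qed
  have "(\<Sum>\<^sub>\<infinity>k. ennreal (G k (kap \<alpha> * (if n \<le> \<bar>k\<bar> then norm (c k) else 0)))) \<le> 1"
  proof (rule avg_core[OF G _ n a])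
    fix h :: real assume h: "h \<in> {0..1/n}"
    have "lux_norm Ms (multc \<alpha> h c) < ennreal b" using H[OF h] Ab by simp
    then have "ladm Ms (multc \<alpha> h c) b" by (rule lux_lt[OF orl])
    moreover have "norm (multc \<alpha> h c k) = mfun \<alpha> (of_int k * h) * norm (c k)" for k
      by (simp add: multc_def norm_mult mfun_nonneg)
    ultimately show "(\<Sum>\<^sub>\<infinity>k. ennreal (G k (mfun \<alpha> (of_int k * h) * norm (c k)))) \<le> 1"
      by (simp add: ladm_def G_def)
  qed simp
  moreover have "norm (tailc n c k) / (b / kap \<alpha>) = kap \<alpha> * (if n \<le> \<bar>k\<bar> then norm (c k) else 0) / b" for k
    using kap_pos[of \<alpha>] b0 by (simp add: tailc_def field_simps)
  ultimately have "ladm Ms (tailc n c) (b / kap \<alpha>)"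
    using b0 kap_pos[of \<alpha>] by (simp add: ladm_def G_def mult.commute)
  then show "lux_norm Ms (tailc n c) \<le> ennreal (1 / kap \<alpha> * b)"
    using lux_le by simp
qed

lemma orlicz_jackson:
  assumes n: "1 \<le> n" and a: "\<alpha> > 0"
    and H: "\<And>h. h \<in> {0..1/n} \<Longrightarrow> orlicz_norm Ms (multc \<alpha> h c) \<le> A"
  shows "orlicz_norm Ms (tailc n c) \<le> ennreal (1 / kap \<alpha>) * A"
  unfolding orlicz_norm_def
proof (rule SUP_least)
  fix lam assume lam: "lam \<in> Lambda_set Ms"
  then have l0: "lam k > 0" for k by (simp add: Lambda_set_def)
  define G where "G k x = lam k * x" for k x
  have G: "gok (G k)" for k
    unfolding gok_def G_def using l0[of k]
    by (auto intro!: mono_onI mult_left_mono)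
  have "(\<Sum>\<^sub>\<infinity>k. ennreal (G k (kap \<alpha> * (if n \<le> \<bar>k\<bar> then norm (c k) else 0)))) \<le> A"
  proof (rule avg_core[OF G _ n a])
    fix h :: real assume h: "h \<in> {0..1/n}"
    have "norm (multc \<alpha> h c k) = mfun \<alpha> (of_int k * h) * norm (c k)" for k
      by (simp add: multc_def norm_mult mfun_nonneg)
    then have "(\<Sum>\<^sub>\<infinity>k. ennreal (G k (mfun \<alpha> (of_int k * h) * norm (c k)))) =
       (\<Sum>\<^sub>\<infinity>k. ennreal (lam k * norm (multc \<alpha> h c k)))" by (simp add: G_def)
    also have "\<dots> \<le> orlicz_norm Ms (multc \<alpha> h c)"
      unfolding orlicz_norm_def using lam by (rule SUP_upper)
    also have "\<dots> \<le> A" by (rule H[OF h])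
    finally show "(\<Sum>\<^sub>\<infinity>k. ennreal (G k (mfun \<alpha> (of_int k * h) * norm (c k)))) \<le> A" .
  qed simp
  moreover have "(\<Sum>\<^sub>\<infinity>k. ennreal (lam k * norm (tailc n c k))) =
     ennreal (1 / kap \<alpha>) * (\<Sum>\<^sub>\<infinity>k. ennreal (G k (kap \<alpha> * (if n \<le> \<bar>k\<bar> then norm (c k) else 0))))"
  proof -
    have "ennreal (lam k * norm (tailc n c k)) =
       ennreal (1 / kap \<alpha>) * ennreal (G k (kap \<alpha> * (if n \<le> \<bar>k\<bar> then norm (c k) else 0)))" for k
      using kap_pos[of \<alpha>] l0[of k]
      by (subst ennreal_mult'[symmetric]) (auto simp: G_def tailc_def field_simps)
    then show ?thesis by (simp add: enn_infsum_cmult)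
  qed
  ultimately show "(\<Sum>\<^sub>\<infinity>k. ennreal (lam k * norm (tailc n c k))) \<le> ennreal (1 / kap \<alpha>) * A"
    by (simp add: mult_left_mono)
qed

definition wt :: "real \<Rightarrow> nat \<Rightarrow> real" where
  "wt \<alpha> v = real (Suc v) powr \<alpha> - real v powr \<alpha>"

lemma wt_telescope: "\<alpha> > 0 \<Longrightarrow> (\<Sum>v<m. wt \<alpha> v) = real m powr \<alpha>"
  unfolding wt_def by (subst sum_lessThan_telescope[where f = "\<lambda>v. real v powr \<alpha>"]) simp

lemma wt_pos: "\<alpha> > 0 \<Longrightarrow> 0 < wt \<alpha> v"
  unfolding wt_def by (simp add: powr_less_mono2)

lemma wt_le: assumes a: "\<alpha> > 0" shows "wt \<alpha> v \<le> max 1 \<alpha> * real (Suc v) powr (\<alpha> - 1)"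
proof (cases "v = 0")
  case True
  then show ?thesis by (simp add: wt_def)
next
  case False
  then have v1: "real v \<ge> 1" by simp
  show ?thesis
  proof (cases "\<alpha> \<ge> 1")
    case True
    have "\<exists>z. real v < z \<and> z < real (Suc v) \<and>
        (\<lambda>x. x powr \<alpha>) (real (Suc v)) - (\<lambda>x. x powr \<alpha>) (real v) = (real (Suc v) - real v) * (\<alpha> * z powr (\<alpha> - 1))"
      by (rule MVT2) (use v1 in \<open>auto intro!: derivative_eq_intros\<close>)
    then obtain z where z: "real v < z" "z < real (Suc v)"
      and eq: "real (Suc v) powr \<alpha> - real v powr \<alpha> = \<alpha> * z powr (\<alpha> - 1)" by auto
    have "z powr (\<alpha> - 1) \<le> real (Suc v) powr (\<alpha> - 1)"
      using z v1 True by (intro powr_mono2) auto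
    then have "\<alpha> * z powr (\<alpha> - 1) \<le> \<alpha> * real (Suc v) powr (\<alpha> - 1)" using a by simp
    then show ?thesis using eq True by (simp add: wt_def)
  next
    case False
    have "real v * real (Suc v) powr (\<alpha> - 1) \<le> real v * real v powr (\<alpha> - 1)"
      using v1 False by (intro mult_left_mono powr_mono2') auto
    also have "\<dots> = real v powr \<alpha>" using v1 by (simp add: powr_mult_base)
    finally have "real v * real (Suc v) powr (\<alpha> - 1) \<le> real v powr \<alpha>" .
    moreover have "real (Suc v) powr \<alpha> = real (Suc v) * real (Suc v) powr (\<alpha> - 1)"
      by (simp add: powr_mult_base)
    ultimately have "wt \<alpha> v \<le> real (Suc v) powr (\<alpha> - 1)"
      unfolding wt_def by (simp add: algebra_simps)
    then show ?thesis using False by simp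
  qed
qed

lemma mfun_le_abs: "\<alpha> > 0 \<Longrightarrow> mfun \<alpha> t \<le> \<bar>t\<bar> powr \<alpha>"
  unfolding mfun_def
proof (rule powr_mono2)
  show "2 * \<bar>sin (t / 2)\<bar> \<le> \<bar>t\<bar>" using abs_sin_x_le_abs_x[of "t/2"] by simp
qed auto

lemma mfun_le_2: "\<alpha> > 0 \<Longrightarrow> mfun \<alpha> t \<le> 2 powr \<alpha>"
  unfolding mfun_def by (rule powr_mono2) auto

lemma mfun_zero: "\<alpha> > 0 \<Longrightarrow> mfun \<alpha> 0 = 0"
  unfolding mfun_def by simp


definition latnorm :: "((int \<Rightarrow> complex) \<Rightarrow> ennreal) \<Rightarrow> real \<Rightarrow> bool" where
  "latnorm N \<alpha> \<longleftrightarrow>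
     (\<forall>c d. (\<forall>k. norm (c k) \<le> norm (d k)) \<longrightarrow> N c \<le> N d) \<and>
     (\<forall>c d. N (\<lambda>k. c k + d k) \<le> N c + N d) \<and>
     (\<forall>c r. r > 0 \<longrightarrow> N (\<lambda>k. of_real r * c k) \<le> ennreal r * N c) \<and>
     N (\<lambda>k. 0) = 0 \<and>
     (\<forall>n c A. 1 \<le> n \<longrightarrow> (\<forall>h\<in>{0..1/real n}. N (multc \<alpha> h c) \<le> A) \<longrightarrow>
        N (tailc n c) \<le> ennreal (1 / kap \<alpha>) * A)"

lemma latnorm_lux:
  assumes orl: "\<And>k. orlicz_function (Ms k)" and a: "\<alpha> > 0" shows "latnorm (lux_norm Ms) \<alpha>"
  unfolding latnorm_def
proof (intro conjI allI impI)
  show "lux_norm Ms c \<le> lux_norm Ms d" if "\<forall>k. norm (c k) \<le> norm (d k)" for c d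
    using that by (intro lux_mono[OF orl]) auto
  show "lux_norm Ms (\<lambda>k. c k + d k) \<le> lux_norm Ms c + lux_norm Ms d" for c d by (rule lux_add[OF orl])
  show "lux_norm Ms (\<lambda>k. of_real r * c k) \<le> ennreal r * lux_norm Ms c" if "r > 0" for c r
    by (rule lux_scale[OF orl that])
  show "lux_norm Ms (\<lambda>k. 0) = 0" by (rule lux_zero[OF orl])
  show "lux_norm Ms (tailc n c) \<le> ennreal (1 / kap \<alpha>) * A"
    if "1 \<le> n" "\<forall>h\<in>{0..1/real n}. lux_norm Ms (multc \<alpha> h c) \<le> A" for n c A
    using that by (intro lux_jackson[OF orl _ a]) auto
qed

lemma latnorm_orlicz:
  assumes a: "\<alpha> > 0" shows "latnorm (orlicz_norm Ms) \<alpha>"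
  unfolding latnorm_def
proof (intro conjI allI impI)
  show "orlicz_norm Ms c \<le> orlicz_norm Ms d" if "\<forall>k. norm (c k) \<le> norm (d k)" for c d
    using that by (intro orlicz_mono) auto
  show "orlicz_norm Ms (\<lambda>k. c k + d k) \<le> orlicz_norm Ms c + orlicz_norm Ms d" for c d by (rule orlicz_add)
  show "orlicz_norm Ms (\<lambda>k. of_real r * c k) \<le> ennreal r * orlicz_norm Ms c" if "r > 0" for c r
    by (rule orlicz_scale[OF that])
  show "orlicz_norm Ms (\<lambda>k. 0) = 0" by (rule orlicz_zero)
  show "orlicz_norm Ms (tailc n c) \<le> ennreal (1 / kap \<alpha>) * A"
    if "1 \<le> n" "\<forall>h\<in>{0..1/real n}. orlicz_norm Ms (multc \<alpha> h c) \<le> A" for n c A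
    using that by (intro orlicz_jackson[OF _ a]) auto
qed

lemma latnorm_mono: "latnorm N \<alpha> \<Longrightarrow> (\<And>k. norm (c k) \<le> norm (d k)) \<Longrightarrow> N c \<le> N d"
  unfolding latnorm_def by blast

lemma latnorm_cong: "latnorm N \<alpha> \<Longrightarrow> (\<And>k. norm (c k) = norm (d k)) \<Longrightarrow> N c = N d"
  by (metis latnorm_mono order.antisym order_refl)

lemma latnorm_scale0:
  assumes N: "latnorm N \<alpha>" and r: "r \<ge> 0"
  shows "N (\<lambda>k. of_real r * c k) \<le> ennreal r * N c"
proof (cases "r = 0")
  case True
  have "N (\<lambda>k. of_real r * c k) \<le> N (\<lambda>k. 0)" using True by (intro latnorm_mono[OF N]) simp
  also have "\<dots> = 0" using N by (simp add: latnorm_def)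
  finally show ?thesis by simp
next
  case False then show ?thesis using N r unfolding latnorm_def by auto
qed

lemma latnorm_sum:
  assumes N: "latnorm N \<alpha>" and fin: "finite V" and r: "\<And>v. v \<in> V \<Longrightarrow> r v \<ge> 0"
  shows "N (\<lambda>k. \<Sum>v\<in>V. of_real (r v) * d v k) \<le> (\<Sum>v\<in>V. ennreal (r v) * N (d v))"
  using fin r
proof (induction V rule: finite_induct)
  case empty
  then show ?case using N by (simp add: latnorm_def)
next
  case (insert x F)
  have "N (\<lambda>k. \<Sum>v\<in>insert x F. of_real (r v) * d v k) = N (\<lambda>k. of_real (r x) * d x k + (\<Sum>v\<in>F. of_real (r v) * d v k))"
    using insert by simp
  also have "\<dots> \<le> N (\<lambda>k. of_real (r x) * d x k) + N (\<lambda>k. \<Sum>v\<in>F. of_real (r v) * d v k)"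
    using N by (simp add: latnorm_def)
  also have "\<dots> \<le> ennreal (r x) * N (d x) + (\<Sum>v\<in>F. ennreal (r v) * N (d v))"
    using insert by (intro add_mono latnorm_scale0[OF N]) auto
  also have "\<dots> = (\<Sum>v\<in>insert x F. ennreal (r v) * N (d v))" using insert by simp
  finally show ?case .
qed

lemma latnorm_tail_le: "latnorm N \<alpha> \<Longrightarrow> N (tailc n c) \<le> N c"
  by (rule latnorm_mono) (auto simp: tailc_def)

lemma pointwise_bound:
  fixes c :: "int \<Rightarrow> complex" and n :: nat and h \<delta> :: real
  assumes a: "\<alpha> > 0" and h: "\<bar>h\<bar> \<le> \<delta>"
  shows "norm (multc \<alpha> h c k) \<le>
     (\<Sum>v<n. \<delta> powr \<alpha> * wt \<alpha> v * norm (tailc (Suc v) c k)) + 2 powr \<alpha> * norm (tailc n c k)"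
proof -
  have d0: "0 \<le> \<delta>" using h by linarith
  have nm: "norm (multc \<alpha> h c k) = mfun \<alpha> (of_int k * h) * norm (c k)"
    by (simp add: multc_def norm_mult mfun_nonneg)
  have sumnn: "0 \<le> (\<Sum>v<n. \<delta> powr \<alpha> * wt \<alpha> v * norm (tailc (Suc v) c k))"
    using wt_pos[OF a] by (intro sum_nonneg mult_nonneg_nonneg) (auto intro: less_imp_le)
  show ?thesis
  proof (cases "n \<le> \<bar>k\<bar>")
    case True
    have "mfun \<alpha> (of_int k * h) * norm (c k) \<le> 2 powr \<alpha> * norm (c k)"
      by (intro mult_right_mono mfun_le_2[OF a]) auto
    then show ?thesis using True nm sumnn by (simp add: tailc_def)
  next
    case False
    define m where "m = nat \<bar>k\<bar>"
    have mn: "m < n" using False by (simp add: m_def)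
    have "mfun \<alpha> (of_int k * h) \<le> \<bar>of_int k * h\<bar> powr \<alpha>" by (rule mfun_le_abs[OF a])
    also have "\<dots> \<le> (real m * \<delta>) powr \<alpha>"
      using h a by (intro powr_mono2) (auto simp: m_def abs_mult intro!: mult_left_mono)
    also have "\<dots> = \<delta> powr \<alpha> * (\<Sum>v<m. wt \<alpha> v)"
      using d0 by (simp add: wt_telescope[OF a] powr_mult mult.commute)
    finally have A: "mfun \<alpha> (of_int k * h) * norm (c k) \<le> (\<Sum>v<m. \<delta> powr \<alpha> * wt \<alpha> v * norm (c k))"
    proof -
      assume B: "mfun \<alpha> (of_int k * h) \<le> \<delta> powr \<alpha> * (\<Sum>v<m. wt \<alpha> v)"
      have "mfun \<alpha> (of_int k * h) * norm (c k) \<le> \<delta> powr \<alpha> * (\<Sum>v<m. wt \<alpha> v) * norm (c k)"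
        by (rule mult_right_mono[OF B]) simp
      also have "\<dots> = (\<Sum>v<m. \<delta> powr \<alpha> * wt \<alpha> v * norm (c k))"
        by (simp add: sum_distrib_left sum_distrib_right)
      finally show ?thesis .
    qed
    have "(\<Sum>v<m. \<delta> powr \<alpha> * wt \<alpha> v * norm (c k)) = (\<Sum>v<m. \<delta> powr \<alpha> * wt \<alpha> v * norm (tailc (Suc v) c k))"
      by (intro sum.cong) (auto simp: tailc_def m_def)
    also have "\<dots> \<le> (\<Sum>v<n. \<delta> powr \<alpha> * wt \<alpha> v * norm (tailc (Suc v) c k))"
      using mn wt_pos[OF a] by (intro sum_mono2) (auto intro!: mult_nonneg_nonneg simp: order.strict_implies_order[OF wt_pos[OF a]])
    finally show ?thesis using A nm False by (simp add: tailc_def)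
  qed
qed


lemma om_pos:
  fixes \<omega> :: "real \<Rightarrow> real"
  assumes om_mono: "mono_on {0..1} \<omega>" and om_lim: "(\<omega> \<longlongrightarrow> 0) (at_right 0)"
    and om_nz: "\<And>\<delta>. \<delta> \<in> {0<..1} \<Longrightarrow> \<omega> \<delta> \<noteq> 0" and x: "x \<in> {0<..1}"
  shows "\<omega> x > 0"
proof -
  have "eventually (\<lambda>y. \<omega> y \<le> \<omega> x) (at_right 0)"
    unfolding eventually_at_right_field using x
    by (intro exI[of _ x]) (auto intro!: mono_onD[OF om_mono])
  then have "0 \<le> \<omega> x" by (intro tendsto_upperbound[OF om_lim]) auto
  then show ?thesis using om_nz[OF x] by linarith
qed

lemma jackson_dir:
  fixes \<omega> :: "real \<Rightarrow> real"
  assumes N: "latnorm N \<alpha>"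
    and H: "\<exists>C. \<forall>\<^sub>F \<delta> in at_right 0. (SUP h\<in>{h. \<bar>h\<bar> \<le> \<delta>}. N (multc \<alpha> h c)) \<le> ennreal (C * \<omega> \<delta>)"
  shows "\<exists>C. \<forall>\<^sub>F n in sequentially. N (tailc n c) \<le> ennreal (C * \<omega> (1 / real n))"
proof -
  obtain C where "\<forall>\<^sub>F \<delta> in at_right 0. (SUP h\<in>{h. \<bar>h\<bar> \<le> \<delta>}. N (multc \<alpha> h c)) \<le> ennreal (C * \<omega> \<delta>)"
    using H by blast
  then obtain d where d: "d > 0"
    and P: "\<And>\<delta>. 0 < \<delta> \<Longrightarrow> \<delta> < d \<Longrightarrow> (SUP h\<in>{h. \<bar>h\<bar> \<le> \<delta>}. N (multc \<alpha> h c)) \<le> ennreal (C * \<omega> \<delta>)"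
    unfolding eventually_at_right_field by auto
  obtain n0 :: nat where n0: "1 / d < n0" using reals_Archimedean2 by blast
  have "N (tailc n c) \<le> ennreal (C / kap \<alpha> * \<omega> (1 / real n))" if n: "n \<ge> Suc n0" for n
  proof -
    have n1: "1 \<le> n" using n by simp
    have "n0 > 0" using n0 d by (cases "n0 = 0") auto
    have "1 / real n < d"
    proof -
      have "1 / d < real n" using n0 n by linarith
      then show ?thesis using d n1 by (simp add: field_simps)
    qed
    then have B: "(SUP h\<in>{h. \<bar>h\<bar> \<le> 1 / real n}. N (multc \<alpha> h c)) \<le> ennreal (C * \<omega> (1 / real n))"
      using n1 by (intro P) auto
    have "N (tailc n c) \<le> ennreal (1 / kap \<alpha>) * ennreal (C * \<omega> (1 / real n))"
    proof -
      have "\<forall>h\<in>{0..1/real n}. N (multc \<alpha> h c) \<le> ennreal (C * \<omega> (1 / real n))"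
      proof
        fix h assume h: "h \<in> {0..1/real n}"
        have "N (multc \<alpha> h c) \<le> (SUP h\<in>{h. \<bar>h\<bar> \<le> 1 / real n}. N (multc \<alpha> h c))"
          using h by (intro SUP_upper) auto
        then show "N (multc \<alpha> h c) \<le> ennreal (C * \<omega> (1 / real n))" using B by simp
      qed
      then show ?thesis using N n1 unfolding latnorm_def by blast
    qed
    also have "\<dots> = ennreal (C / kap \<alpha> * \<omega> (1 / real n))"
      using kap_pos[of \<alpha>] by (subst ennreal_mult'[symmetric]) auto
    finally show ?thesis .
  qed
  then show ?thesis unfolding eventually_sequentially by blast
qed


lemma real_ineq_main:
  fixes \<omega> :: "real \<Rightarrow> real"
  assumes a: "\<alpha> > 0" and C1: "C1 \<ge> 0" and K: "K > 0" and d: "0 < \<delta>" and n1: "1 \<le> n" and dn: "\<delta> * real n \<le> 2"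
    and om0: "\<And>v. 1 \<le> v \<Longrightarrow> 0 \<le> \<omega> (1 / real v)"
    and Bn: "(\<Sum>v=1..n. real v powr (\<alpha> - 1) * \<omega> (1 / real v)) \<le> K * (real n powr \<alpha> * \<omega> (1 / real n))"
  shows "(\<Sum>v<n. \<delta> powr \<alpha> * wt \<alpha> v * (C1 * \<omega> (1 / real (Suc v)))) + 2 powr \<alpha> * (C1 * \<omega> (1 / real n))
     \<le> (2 powr \<alpha> * max 1 \<alpha> * C1 * K + 2 powr \<alpha> * C1) * \<omega> (1 / real n)"
proof -
  have "(\<Sum>v<n. \<delta> powr \<alpha> * wt \<alpha> v * (C1 * \<omega> (1 / real (Suc v)))) \<le>
        (\<Sum>v<n. \<delta> powr \<alpha> * (max 1 \<alpha> * real (Suc v) powr (\<alpha> - 1)) * (C1 * \<omega> (1 / real (Suc v))))"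
    by (intro sum_mono mult_right_mono mult_left_mono wt_le[OF a] mult_nonneg_nonneg C1 om0) auto
  also have "\<dots> = \<delta> powr \<alpha> * max 1 \<alpha> * C1 * (\<Sum>v<n. real (Suc v) powr (\<alpha> - 1) * \<omega> (1 / real (Suc v)))"
    by (simp add: sum_distrib_left mult_ac)
  also have "(\<Sum>v<n. real (Suc v) powr (\<alpha> - 1) * \<omega> (1 / real (Suc v))) = (\<Sum>v=1..n. real v powr (\<alpha> - 1) * \<omega> (1 / real v))"
    using sum.atLeast1_atMost_eq[of "\<lambda>v. real v powr (\<alpha> - 1) * \<omega> (1 / real v)" n] by simp
  also have "\<delta> powr \<alpha> * max 1 \<alpha> * C1 * (\<Sum>v=1..n. real v powr (\<alpha> - 1) * \<omega> (1 / real v)) \<le>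
             \<delta> powr \<alpha> * max 1 \<alpha> * C1 * (K * (real n powr \<alpha> * \<omega> (1 / real n)))"
    by (intro mult_left_mono Bn) (use C1 in auto)
  also have "\<dots> = (\<delta> * real n) powr \<alpha> * (max 1 \<alpha> * C1 * K * \<omega> (1 / real n))"
    using d by (simp add: powr_mult mult_ac)
  also have "\<dots> \<le> 2 powr \<alpha> * (max 1 \<alpha> * C1 * K * \<omega> (1 / real n))"
    using d n1 dn a C1 K om0[OF n1] by (intro mult_right_mono powr_mono2 mult_nonneg_nonneg) auto
  finally show ?thesis by (simp add: algebra_simps)
qed


lemma norm_step:
  fixes \<omega> :: "real \<Rightarrow> real"
  assumes N: "latnorm N \<alpha>" and a: "\<alpha> > 0" and h: "\<bar>h\<bar> \<le> \<delta>" and n1: "1 \<le> n" and C1: "C1 \<ge> 0"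
    and Eb: "\<And>v. 1 \<le> v \<Longrightarrow> N (tailc v c) \<le> ennreal (C1 * \<omega> (1 / real v))"
    and om0: "\<And>v. 1 \<le> v \<Longrightarrow> 0 \<le> \<omega> (1 / real v)"
  shows "N (multc \<alpha> h c) \<le>
     ennreal ((\<Sum>v<n. \<delta> powr \<alpha> * wt \<alpha> v * (C1 * \<omega> (1 / real (Suc v)))) + 2 powr \<alpha> * (C1 * \<omega> (1 / real n)))"
proof -
  define dd where "dd j k = complex_of_real (norm (tailc j c k))" for j k
  have ddE: "N (dd j) = N (tailc j c)" for j
    by (rule latnorm_cong[OF N]) (simp add: dd_def)
  have wnn: "0 \<le> \<delta> powr \<alpha> * wt \<alpha> v" for v using wt_pos[OF a, of v] by simp
  have "N (multc \<alpha> h c) \<le> N (\<lambda>k. (\<Sum>v<n. of_real (\<delta> powr \<alpha> * wt \<alpha> v) * dd (Suc v) k) + of_real (2 powr \<alpha>) * dd n k)"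
  proof (rule latnorm_mono[OF N])
    fix k
    define X where "X = (\<Sum>v<n. \<delta> powr \<alpha> * wt \<alpha> v * norm (tailc (Suc v) c k)) + 2 powr \<alpha> * norm (tailc n c k)"
    have E: "(\<Sum>v<n. of_real (\<delta> powr \<alpha> * wt \<alpha> v) * dd (Suc v) k) + of_real (2 powr \<alpha>) * dd n k = complex_of_real X"
      by (simp add: dd_def X_def)
    have X0: "0 \<le> X"
      unfolding X_def using wt_pos[OF a] by (intro add_nonneg_nonneg sum_nonneg mult_nonneg_nonneg) (auto simp: less_imp_le)
    have "norm (multc \<alpha> h c k) \<le> X" unfolding X_def by (rule pointwise_bound[OF a h])
    also have "X = norm (complex_of_real X)" using X0 by simp
    finally show "norm (multc \<alpha> h c k) \<le> norm ((\<Sum>v<n. of_real (\<delta> powr \<alpha> * wt \<alpha> v) * dd (Suc v) k) + of_real (2 powr \<alpha>) * dd n k)"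
      unfolding E .
  qed
  also have "\<dots> \<le> N (\<lambda>k. \<Sum>v<n. of_real (\<delta> powr \<alpha> * wt \<alpha> v) * dd (Suc v) k) + N (\<lambda>k. of_real (2 powr \<alpha>) * dd n k)"
    using N by (simp add: latnorm_def)
  also have "\<dots> \<le> (\<Sum>v<n. ennreal (\<delta> powr \<alpha> * wt \<alpha> v) * N (dd (Suc v))) + ennreal (2 powr \<alpha>) * N (dd n)"
    by (intro add_mono latnorm_sum[OF N] latnorm_scale0[OF N] wnn) auto
  also have "\<dots> \<le> (\<Sum>v<n. ennreal (\<delta> powr \<alpha> * wt \<alpha> v) * ennreal (C1 * \<omega> (1 / real (Suc v)))) + ennreal (2 powr \<alpha>) * ennreal (C1 * \<omega> (1 / real n))"
    unfolding ddE by (intro add_mono sum_mono mult_left_mono Eb n1) auto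
  also have "\<dots> = ennreal ((\<Sum>v<n. \<delta> powr \<alpha> * wt \<alpha> v * (C1 * \<omega> (1 / real (Suc v)))) + 2 powr \<alpha> * (C1 * \<omega> (1 / real n)))"
  proof -
    have t: "0 \<le> \<delta> powr \<alpha> * wt \<alpha> v * (C1 * \<omega> (1 / real (Suc v)))" for v
      using wnn[of v] C1 om0[of "Suc v"] by simp
    have "(\<Sum>v<n. ennreal (\<delta> powr \<alpha> * wt \<alpha> v) * ennreal (C1 * \<omega> (1 / real (Suc v)))) =
          (\<Sum>v<n. ennreal (\<delta> powr \<alpha> * wt \<alpha> v * (C1 * \<omega> (1 / real (Suc v)))))"
      using wnn by (intro sum.cong refl) (simp add: ennreal_mult')
    also have "\<dots> = ennreal (\<Sum>v<n. \<delta> powr \<alpha> * wt \<alpha> v * (C1 * \<omega> (1 / real (Suc v))))"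
      using t by (simp add: sum_ennreal)
    finally have e1: "(\<Sum>v<n. ennreal (\<delta> powr \<alpha> * wt \<alpha> v) * ennreal (C1 * \<omega> (1 / real (Suc v)))) =
          ennreal (\<Sum>v<n. \<delta> powr \<alpha> * wt \<alpha> v * (C1 * \<omega> (1 / real (Suc v))))" .
    have e2: "ennreal (2 powr \<alpha>) * ennreal (C1 * \<omega> (1 / real n)) = ennreal (2 powr \<alpha> * (C1 * \<omega> (1 / real n)))"
      by (simp add: ennreal_mult')
    show ?thesis unfolding e1 e2
      using t C1 om0[OF n1] by (subst ennreal_plus) (auto intro!: sum_nonneg)
  qed
  finally show ?thesis .
qed


lemma bernstein_dir:
  fixes \<omega> :: "real \<Rightarrow> real"
  assumes N: "latnorm N \<alpha>" and a: "\<alpha> > 0"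
    and om_mono: "mono_on {0..1} \<omega>"
    and om_nz: "\<And>\<delta>. \<delta> \<in> {0<..1} \<Longrightarrow> \<omega> \<delta> \<noteq> 0"
    and om_lim: "(\<omega> \<longlongrightarrow> 0) (at_right 0)"
    and B_alpha: "(\<lambda>n::nat. \<Sum>v=1..n. real v powr (\<alpha> - 1) * \<omega> (1 / real v))
                    \<in> O(\<lambda>n. real n powr \<alpha> * \<omega> (1 / real n))"
    and fin: "N c < \<infinity>"
    and H: "\<exists>C. \<forall>\<^sub>F n in sequentially. N (tailc n c) \<le> ennreal (C * \<omega> (1 / real n))"
  shows "\<exists>C. \<forall>\<^sub>F \<delta> in at_right 0. (SUP h\<in>{h. \<bar>h\<bar> \<le> \<delta>}. N (multc \<alpha> h c)) \<le> ennreal (C * \<omega> \<delta>)"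
proof -
  have ompos: "\<omega> x > 0" if "x \<in> {0<..1}" for x by (rule om_pos[OF om_mono om_lim om_nz that])
  have om0: "0 \<le> \<omega> (1 / real v)" if "1 \<le> v" for v using ompos[of "1 / real v"] that by simp
  obtain K where K: "K > 0"
    and KE: "eventually (\<lambda>n. norm (\<Sum>v=1..n. real v powr (\<alpha> - 1) * \<omega> (1 / real v)) \<le>
                K * norm (real n powr \<alpha> * \<omega> (1 / real n))) sequentially"
    using B_alpha by (elim landau_o.bigE)
  then obtain NB where NB: "\<And>n. n \<ge> NB \<Longrightarrow> norm (\<Sum>v=1..n. real v powr (\<alpha> - 1) * \<omega> (1 / real v)) \<le>
                K * norm (real n powr \<alpha> * \<omega> (1 / real n))"
    unfolding eventually_sequentially by blast
  obtain C n0 where Cn0: "\<And>n. n \<ge> n0 \<Longrightarrow> N (tailc n c) \<le> ennreal (C * \<omega> (1 / real n))"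
    using H unfolding eventually_sequentially by blast
  define m0 where "m0 = max n0 1"
  obtain A0 where A0: "N c = ennreal A0" "A0 \<ge> 0" using fin by (cases "N c" rule: ennreal_cases) auto
  have om_m0: "\<omega> (1 / real m0) > 0" by (rule ompos) (auto simp: m0_def)
  define C1 where "C1 = max (max C 0) (A0 / \<omega> (1 / real m0))"
  have C1: "C1 \<ge> 0" by (simp add: C1_def)
  have Eb: "N (tailc v c) \<le> ennreal (C1 * \<omega> (1 / real v))" if v: "1 \<le> v" for v
  proof (cases "v \<ge> m0")
    case True
    then have "N (tailc v c) \<le> ennreal (C * \<omega> (1 / real v))" by (intro Cn0) (simp add: m0_def)
    also have "\<dots> \<le> ennreal (C1 * \<omega> (1 / real v))"
      using om0[OF v] by (intro ennreal_leI mult_right_mono) (auto simp: C1_def)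
    finally show ?thesis .
  next
    case False
    have "N (tailc v c) \<le> ennreal A0" using latnorm_tail_le[OF N] A0 by metis
    also have "A0 = (A0 / \<omega> (1 / real m0)) * \<omega> (1 / real m0)" using om_m0 by simp
    also have "\<dots> \<le> C1 * \<omega> (1 / real v)"
    proof (intro mult_mono)
      show "A0 / \<omega> (1 / real m0) \<le> C1" by (simp add: C1_def)
      show "\<omega> (1 / real m0) \<le> \<omega> (1 / real v)"
        using False v by (intro mono_onD[OF om_mono]) (auto simp: m0_def frac_le)
    qed (use C1 om0[OF v] om_m0 in auto)
    finally show ?thesis by (simp add: ennreal_leI)
  qed
  define C2 where "C2 = 2 powr \<alpha> * max 1 \<alpha> * C1 * K + 2 powr \<alpha> * C1"
  have C2: "C2 \<ge> 0" using C1 K by (simp add: C2_def)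
  have "(SUP h\<in>{h. \<bar>h\<bar> \<le> \<delta>}. N (multc \<alpha> h c)) \<le> ennreal (C2 * \<omega> \<delta>)"
    if d: "0 < \<delta>" "\<delta> < 1 / (real NB + 1)" for \<delta>
  proof -
    define n where "n = nat \<lceil>1 / \<delta>\<rceil>"
    have ip: "0 < 1 / \<delta>" using d by simp
    have nreal: "real n = of_int \<lceil>1 / \<delta>\<rceil>" unfolding n_def using ip by simp
    have nge: "1 / \<delta> \<le> real n" unfolding nreal by simp
    have nlt: "real n < 1 / \<delta> + 1" unfolding nreal using ceiling_correct[of "1 / \<delta>"] by linarith
    have d1: "\<delta> \<le> 1"
    proof -
      have "\<delta> + \<delta> * real NB < 1" using d by (simp add: field_simps)
      moreover have "0 \<le> \<delta> * real NB" using d by simp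
      ultimately show ?thesis by linarith
    qed
    have n1: "1 \<le> n" using nge d1 d by (smt (verit, ccfv_SIG) le_divide_eq_1_pos of_nat_le_iff of_nat_1 not_less_eq_eq)
    have nNB: "n \<ge> NB"
    proof -
      have "real NB + 1 < 1 / \<delta>" using d by (simp add: field_simps)
      then show ?thesis using nge by linarith
    qed
    have dn: "\<delta> * real n \<le> 2"
    proof -
      have "\<delta> * real n \<le> \<delta> * (1 / \<delta> + 1)" using nlt d by (intro mult_left_mono) auto
      also have "\<dots> = 1 + \<delta>" using d by (simp add: field_simps)
      finally show ?thesis using d1 by simp
    qed
    have inv_le: "1 / real n \<le> \<delta>" using nge d n1 by (simp add: field_simps)
    have Bn: "(\<Sum>v=1..n. real v powr (\<alpha> - 1) * \<omega> (1 / real v)) \<le> K * (real n powr \<alpha> * \<omega> (1 / real n))"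
    proof -
      have s0: "0 \<le> (\<Sum>v=1..n. real v powr (\<alpha> - 1) * \<omega> (1 / real v))"
        by (intro sum_nonneg mult_nonneg_nonneg om0) auto
      have r0: "0 \<le> real n powr \<alpha> * \<omega> (1 / real n)" using om0[OF n1] by simp
      show ?thesis using NB[OF nNB] s0 r0 by simp
    qed
    show ?thesis
    proof (rule SUP_least)
      fix h assume "h \<in> {h. \<bar>h\<bar> \<le> \<delta>}"
      then have h: "\<bar>h\<bar> \<le> \<delta>" by simp
      have "N (multc \<alpha> h c) \<le>
         ennreal ((\<Sum>v<n. \<delta> powr \<alpha> * wt \<alpha> v * (C1 * \<omega> (1 / real (Suc v)))) + 2 powr \<alpha> * (C1 * \<omega> (1 / real n)))"
        by (rule norm_step[OF N a h n1 C1 Eb om0])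
      also have "\<dots> \<le> ennreal (C2 * \<omega> (1 / real n))"
        unfolding C2_def by (intro ennreal_leI real_ineq_main[OF a C1 K d(1) n1 dn om0 Bn])
      also have "\<dots> \<le> ennreal (C2 * \<omega> \<delta>)"
        using C2 inv_le d1 d n1 by (intro ennreal_leI mult_left_mono mono_onD[OF om_mono]) auto
      finally show "N (multc \<alpha> h c) \<le> ennreal (C2 * \<omega> \<delta>)" .
    qed
  qed
  moreover have "0 < 1 / (real NB + 1)" by simp
  ultimately have "\<forall>\<^sub>F \<delta> in at_right 0. (SUP h\<in>{h. \<bar>h\<bar> \<le> \<delta>}. N (multc \<alpha> h c)) \<le> ennreal (C2 * \<omega> \<delta>)"
    unfolding eventually_at_right_field by blast
  then show ?thesis by blast
qed

definition bco :: "real \<Rightarrow> nat \<Rightarrow> real" where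
  "bco \<alpha> j = (-1) ^ j * (\<alpha> gchoose j)"

lemma gchoose_ratio: "real (Suc j) * (\<alpha> gchoose Suc j) = (\<alpha> - real j) * (\<alpha> gchoose j)"
  using gbinomial_absorption[of j \<alpha>] gbinomial_absorb_comp[of \<alpha> j] by simp

lemma summable_abs_gchoose:
  fixes \<alpha> :: real
  assumes a: "\<alpha> > 0"
  shows "summable (\<lambda>j. \<bar>\<alpha> gchoose j\<bar>)"
proof -
  define \<beta> where "\<beta> j = \<bar>\<alpha> gchoose j\<bar>" for j
  define J where "J = nat \<lceil>\<alpha>\<rceil>"
  have JA: "real j \<ge> \<alpha>" if "j \<ge> J" for j using that by (simp add: J_def)
  have rec: "real (Suc j) * \<beta> (Suc j) = real j * \<beta> j - \<alpha> * \<beta> j" if "j \<ge> J" for j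
  proof -
    have "real (Suc j) * \<beta> (Suc j) = \<bar>real (Suc j) * (\<alpha> gchoose Suc j)\<bar>" by (simp add: \<beta>_def abs_mult)
    also have "\<dots> = \<bar>\<alpha> - real j\<bar> * \<beta> j" by (simp only: gchoose_ratio abs_mult \<beta>_def)
    also have "\<bar>\<alpha> - real j\<bar> = real j - \<alpha>" using JA[OF that] by simp
    finally show ?thesis by (simp add: algebra_simps)
  qed
  have tel: "\<alpha> * (\<Sum>j\<in>{J..<J+i}. \<beta> j) + real (J + i) * \<beta> (J + i) = real J * \<beta> J" for i
  proof (induction i)
    case 0 then show ?case by simp
  next
    case (Suc i)
    have "\<alpha> * (\<Sum>j\<in>{J..<J + Suc i}. \<beta> j) = \<alpha> * (\<Sum>j\<in>{J..<J+i}. \<beta> j) + \<alpha> * \<beta> (J + i)"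
      by (simp add: algebra_simps)
    moreover have "real (J + Suc i) * \<beta> (J + Suc i) = real (J + i) * \<beta> (J + i) - \<alpha> * \<beta> (J + i)"
      using rec[of "J + i"] by simp
    ultimately show ?case using Suc by simp
  qed
  have bnd: "(\<Sum>j\<in>{J..<J+i}. \<beta> j) \<le> real J * \<beta> J / \<alpha>" for i
  proof -
    have "0 \<le> real (J + i) * \<beta> (J + i)" by (simp add: \<beta>_def)
    then have "\<alpha> * (\<Sum>j\<in>{J..<J+i}. \<beta> j) \<le> real J * \<beta> J" using tel[of i] by linarith
    then show ?thesis using a by (simp add: field_simps)
  qed
  show ?thesis unfolding \<beta>_def[symmetric]
  proof (rule bounded_imp_summable)
    show "0 \<le> \<beta> j" for j by (simp add: \<beta>_def)
    fix m
    have "(\<Sum>j\<le>m. \<beta> j) \<le> (\<Sum>j\<in>{..<J} \<union> {J..<J+Suc m}. \<beta> j)"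
      by (intro sum_mono2) (auto simp: \<beta>_def)
    also have "\<dots> = (\<Sum>j<J. \<beta> j) + (\<Sum>j\<in>{J..<J+Suc m}. \<beta> j)"
      by (rule sum.union_disjoint) auto
    also have "\<dots> \<le> (\<Sum>j<J. \<beta> j) + real J * \<beta> J / \<alpha>" using bnd[of "Suc m"] by simp
    finally show "(\<Sum>j\<le>m. \<beta> j) \<le> (\<Sum>j<J. \<beta> j) + real J * \<beta> J / \<alpha>" .
  qed
qed

lemma summable_abs_bco: "\<alpha> > 0 \<Longrightarrow> summable (\<lambda>j. \<bar>bco \<alpha> j\<bar>)"
  using summable_abs_gchoose by (simp add: bco_def abs_mult)

lemma binom_open:
  fixes w :: complex
  assumes "norm w < 1"
  shows "(\<lambda>j. complex_of_real (bco \<alpha> j) * w ^ j) sums ((1 - w) powr complex_of_real \<alpha>)"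
proof -
  have "norm (- w) < 1" using assms by simp
  from gen_binomial_complex[OF this, of "complex_of_real \<alpha>"]
  have "(\<lambda>n. (complex_of_real \<alpha> gchoose n) * (- w) ^ n) sums (1 + - w) powr complex_of_real \<alpha>" .
  moreover have "(complex_of_real \<alpha> gchoose n) = complex_of_real (\<alpha> gchoose n)" for n
    by (simp add: gbinomial_prod_rev)
  ultimately show ?thesis
    by (simp add: bco_def power_minus' mult_ac)
qed


lemma binom_boundary:
  fixes z :: complex
  assumes a: "\<alpha> > 0" and z: "norm z = 1"
  shows "norm (\<Sum>j. complex_of_real (bco \<alpha> j) * z ^ j) = norm (1 - z) powr \<alpha>"
proof -
  define Q where "Q r = (\<Sum>j. complex_of_real (bco \<alpha> j) * (complex_of_real r * z) ^ j)" for r :: real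
  have ul: "uniform_limit {0..1} (\<lambda>n r. \<Sum>j<n. complex_of_real (bco \<alpha> j) * (complex_of_real r * z) ^ j) Q sequentially"
    unfolding Q_def
  proof (rule Weierstrass_m_test[OF _ summable_abs_bco[OF a]])
    fix n and r :: real assume r: "r \<in> {0..1}"
    have "norm ((complex_of_real r * z) ^ n) \<le> 1"
      using r z by (simp add: norm_mult norm_power power_le_one)
    then show "norm (complex_of_real (bco \<alpha> n) * (complex_of_real r * z) ^ n) \<le> \<bar>bco \<alpha> n\<bar>"
      by (simp add: norm_mult mult_left_le)
  qed
  have cont: "continuous_on {0..1} Q"
    by (rule uniform_limit_theorem[OF _ ul]) (auto intro!: always_eventually continuous_intros)
  then have "(Q \<longlongrightarrow> Q 1) (at 1 within {0..1})"
    by (simp add: continuous_on_def)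
  then have L1: "(Q \<longlongrightarrow> Q 1) (at_left 1)"
    by (simp add: at_within_Icc_at_left)
  have Q1: "Q 1 = (\<Sum>j. complex_of_real (bco \<alpha> j) * z ^ j)" by (simp add: Q_def)
  have ev: "eventually (\<lambda>r. norm (Q r) = norm (1 - complex_of_real r * z) powr \<alpha>) (at_left 1)"
  proof -
    have "eventually (\<lambda>r::real. r \<in> {0<..<1}) (at_left 1)"
      by (rule eventually_at_leftI[of 0]) auto
    then show ?thesis
    proof (rule eventually_mono)
      fix r :: real assume r: "r \<in> {0<..<1}"
      have "norm (complex_of_real r * z) < 1" using r z by (simp add: norm_mult)
      from binom_open[OF this, of \<alpha>] have "Q r = (1 - complex_of_real r * z) powr complex_of_real \<alpha>"
        unfolding Q_def by (simp add: sums_iff)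
      then show "norm (Q r) = norm (1 - complex_of_real r * z) powr \<alpha>"
        by (simp add: norm_powr_real_powr')
    qed
  qed
  have L2: "((\<lambda>r. norm (1 - complex_of_real r * z) powr \<alpha>) \<longlongrightarrow> norm (1 - z) powr \<alpha>) (at_left 1)"
  proof (rule tendsto_powr')
    show "((\<lambda>r. norm (1 - complex_of_real r * z)) \<longlongrightarrow> norm (1 - z)) (at_left 1)"
    proof -
      have "((\<lambda>r. norm (1 - complex_of_real r * z)) \<longlongrightarrow> norm (1 - complex_of_real 1 * z)) (at_left 1)"
        by (intro tendsto_intros)
      then show ?thesis by simp
    qed
  qed (use a in auto)
  have "((\<lambda>r. norm (Q r)) \<longlongrightarrow> norm (Q 1)) (at_left 1)" by (intro tendsto_norm L1)
  then have "((\<lambda>r. norm (1 - complex_of_real r * z) powr \<alpha>) \<longlongrightarrow> norm (Q 1)) (at_left 1)"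
    using ev by (rule Lim_transform_eventually)
  from tendsto_unique[OF _ this L2] show ?thesis using Q1 by simp
qed

lemma norm_one_minus_cis: "norm (1 - cis t) = 2 * \<bar>sin (t / 2)\<bar>"
proof -
  have "(norm (1 - cis t))^2 = (1 - cos t)^2 + (sin t)^2"
    by (simp add: cmod_def)
  also have "\<dots> = 2 - 2 * cos t" using sin_cos_squared_add[of t] by (simp add: power2_eq_square algebra_simps)
  also have "cos t = 1 - 2 * sin (t/2)^2" using cos_double_sin[of "t/2"] by simp
  finally have E: "(norm (1 - cis t))^2 = (2 * \<bar>sin (t / 2)\<bar>)^2" by (simp add: power2_eq_square)
  show ?thesis by (rule power2_eq_imp_eq[OF E]) auto
qed

lemma mult_series_norm:
  assumes a: "\<alpha> > 0"
  shows "norm (\<Sum>j. complex_of_real (bco \<alpha> j) * cis (- (real j * \<theta>))) = mfun \<alpha> \<theta>"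
proof -
  have "(\<Sum>j. complex_of_real (bco \<alpha> j) * cis (- (real j * \<theta>))) = (\<Sum>j. complex_of_real (bco \<alpha> j) * cis (- \<theta>) ^ j)"
    by (simp add: Complex.DeMoivre)
  also have "norm \<dots> = norm (1 - cis (- \<theta>)) powr \<alpha>" by (rule binom_boundary[OF a]) simp
  also have "\<dots> = mfun \<alpha> \<theta>" by (simp add: norm_one_minus_cis mfun_def)
  finally show ?thesis .
qed

lemma periodic_int:
  fixes g :: "real \<Rightarrow> 'a"
  assumes per: "\<And>x. g (x + P) = g x"
  shows "g (x + of_int m * P) = g x"
proof (induction m arbitrary: x rule: int_induct[where k = 0])
  case base then show ?case by simp
next
  case (step1 i)
  have "g (x + of_int (i + 1) * P) = g ((x + of_int i * P) + P)" by (simp add: algebra_simps)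
  also have "\<dots> = g x" using per step1 by simp
  finally show ?case .
next
  case (step2 i)
  have "g (x + of_int (i - 1) * P) = g ((x - P) + of_int i * P)" by (simp add: algebra_simps)
  also have "\<dots> = g (x - P)" using step2 by simp
  also have "\<dots> = g (x - P + P)" using per[of "x - P"] by simp
  finally show ?case by simp
qed

lemma periodic_has_integral:
  fixes g :: "real \<Rightarrow> 'a::banach"
  assumes per: "\<And>x. g (x + 2 * pi) = g x" and I: "(g has_integral I) {0..2*pi}"
  shows "(g has_integral I) {a..a + 2*pi}"
proof -
  define m where "m = \<lfloor>a / (2 * pi)\<rfloor>"
  define r where "r = a - of_int m * (2 * pi)"
  have r0: "0 \<le> r" and r1: "r < 2 * pi"
  proof -
    have "of_int m \<le> a / (2 * pi)" "a / (2 * pi) < of_int m + 1" unfolding m_def by linarith+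
    then show "0 \<le> r" "r < 2 * pi" unfolding r_def using pi_gt_zero by (simp_all add: field_simps)
  qed
  have gi: "g integrable_on {0..2*pi}" using I by blast
  have i0: "(g has_integral integral {0..r} g) {0..r}"
    by (rule integrable_integral, rule integrable_subinterval_real[OF gi]) (use r1 in auto)
  have i1: "(g has_integral integral {r..2*pi} g) {r..2*pi}"
    by (rule integrable_integral, rule integrable_subinterval_real[OF gi]) (use r0 in auto)
  have sum: "integral {0..r} g + integral {r..2*pi} g = I"
    using has_integral_combine[OF r0 _ i0 i1] r1 I by (auto dest: has_integral_unique)
  have "((g \<circ> (+) (2*pi)) has_integral integral {0..r} g) {0..r}"
  proof -
    have "g \<circ> (+) (2*pi) = g" by (rule ext) (simp add: per add.commute)
    then show ?thesis using i0 by simp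
  qed
  then have "(g has_integral integral {0..r} g) {0 + 2*pi..r + 2*pi}"
    by (simp only: has_integral_shift_Icc_real)
  then have i2: "(g has_integral integral {0..r} g) {2*pi..2*pi + r}"
    by (simp add: add.commute)
  have "(g has_integral (integral {r..2*pi} g + integral {0..r} g)) {r..r + 2*pi}"
    using has_integral_combine[OF _ _ i1 i2] r0 r1 by (simp add: add.commute)
  then have ir: "(g has_integral I) {r..r + 2*pi}" using sum by (simp add: add.commute)
  have "g \<circ> (+) (of_int m * (2 * pi)) = g"
    by (rule ext) (simp add: periodic_int[where g=g and P="2*pi", OF per] add.commute)
  then have "((g \<circ> (+) (of_int m * (2 * pi))) has_integral I) {r..r + 2*pi}" using ir by simp
  then have "(g has_integral I) {r + of_int m * (2 * pi)..r + 2*pi + of_int m * (2 * pi)}"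
    by (simp add: has_integral_shift_Icc_real)
  moreover have "r + of_int m * (2 * pi) = a" by (simp add: r_def)
  moreover have "r + 2*pi + of_int m * (2 * pi) = a + 2 * pi" by (simp add: r_def)
  ultimately show ?thesis by simp
qed

lemma periodic_shift_has_integral:
  fixes g :: "real \<Rightarrow> 'a::banach"
  assumes per: "\<And>x. g (x + 2 * pi) = g x" and I: "(g has_integral I) {0..2*pi}"
  shows "((\<lambda>x. g (x - s)) has_integral I) {0..2*pi}"
proof -
  have "(g has_integral I) {0 + - s..2*pi + - s}"
    using periodic_has_integral[OF per I, of "- s"] by (simp add: algebra_simps)
  then have "((g \<circ> (+) (- s)) has_integral I) {0..2*pi}"
    by (simp only: has_integral_shift_Icc_real)
  then show ?thesis by (simp add: o_def algebra_simps)
qed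


lemma cis_has_integral:
  fixes j :: int
  shows "((\<lambda>x. cis (of_int j * x)) has_integral (if j = 0 then complex_of_real (2 * pi) else 0)) {0..2*pi}"
proof (cases "j = 0")
  case True
  then show ?thesis using has_integral_const_real[of "1::complex" 0 "2*pi"] by (simp add: scaleR_conv_of_real)
next
  case False
  define F where "F x = cis (of_int j * x) / (\<i> * of_int j)" for x :: real
  have "((\<lambda>x. cis (of_int j * x)) has_integral (F (2*pi) - F 0)) {0..2*pi}"
  proof (rule fundamental_theorem_of_calculus)
    fix x :: real assume "x \<in> {0..2*pi}"
    have "((\<lambda>x. cis (of_int j * x)) has_derivative (\<lambda>t. (of_int j * t) *\<^sub>R (\<i> * cis (of_int j * x)))) (at x within {0..2*pi})"
      by (intro has_derivative_cis derivative_eq_intros) auto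
    then have "(F has_derivative (\<lambda>t. ((of_int j * t) *\<^sub>R (\<i> * cis (of_int j * x))) / (\<i> * of_int j))) (at x within {0..2*pi})"
      unfolding F_def using False by (intro derivative_eq_intros) auto
    moreover have "(\<lambda>t. ((of_int j * t) *\<^sub>R (\<i> * cis (of_int j * x))) / (\<i> * of_int j)) = (\<lambda>t. t *\<^sub>R cis (of_int j * x))"
      using False by (auto simp: scaleR_conv_of_real field_simps intro!: ext)
    ultimately show "(F has_vector_derivative cis (of_int j * x)) (at x within {0..2*pi})"
      by (simp add: has_vector_derivative_def)
  qed auto
  moreover have "F (2*pi) - F 0 = 0"
  proof -
    have "cis (of_int j * (2 * pi)) = 1"
      by (simp add: cis_conv_exp exp_eq_1 mult.commute)
    then show ?thesis by (simp add: F_def)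
  qed
  ultimately show ?thesis using False by simp
qed


lemma Lper_mult_cis:
  assumes f: "f \<in> Lper"
  shows "(\<lambda>x. f x * cis (t * x)) absolutely_integrable_on {0..2*pi}"
proof -
  have fa: "f absolutely_integrable_on {0..2*pi}" using f by (simp add: Lper_def)
  have m: "(\<lambda>x. cis (t * x)) \<in> borel_measurable (lebesgue_on {0..2*pi})"
    by (rule continuous_imp_measurable_on_sets_lebesgue) (auto intro!: continuous_intros)
  have b: "bounded ((\<lambda>x. cis (t * x)) ` {0..2*pi})"
    by (rule boundedI[of _ 1]) auto
  have "(\<lambda>x. cis (t * x) * f x) absolutely_integrable_on {0..2*pi}"
    by (rule absolutely_integrable_bounded_measurable_product[OF bilinear_times m _ b fa]) simp
  then show ?thesis by (simp add: mult.commute)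
qed

lemma Lper_mult_cis_int:
  assumes f: "f \<in> Lper"
  shows "(\<lambda>x. f x * cis (t * x)) integrable_on {0..2*pi}"
  using Lper_mult_cis[OF f] set_lebesgue_integral_eq_integral(1) by blast

lemma fc_diff:
  assumes "\<And>k. (\<lambda>x. f x * cis (- (of_int k * x))) integrable_on {0..2*pi}"
    and "\<And>k. (\<lambda>x. t x * cis (- (of_int k * x))) integrable_on {0..2*pi}"
  shows "fourier_coeff (\<lambda>x. f x - t x) k = fourier_coeff f k - fourier_coeff t k"
proof -
  have I: "integral {0..2*pi} (\<lambda>x. (f x - t x) * cis (- (of_int k * x))) =
        integral {0..2*pi} (\<lambda>x. f x * cis (- (of_int k * x))) - integral {0..2*pi} (\<lambda>x. t x * cis (- (of_int k * x)))"
  proof -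
    have "(\<lambda>x. (f x - t x) * cis (- (of_int k * x))) = (\<lambda>x. f x * cis (- (of_int k * x)) - t x * cis (- (of_int k * x)))"
      by (simp add: algebra_simps)
    then show ?thesis using integral_diff[OF assms(1)[of k] assms(2)[of k]] by simp
  qed
  show ?thesis unfolding fourier_coeff_def I by (simp add: right_diff_distrib)
qed

lemma trig_mult_cis_int:
  "(\<lambda>x. (\<Sum>j\<in>{-m..m}. a j * cis (of_int j * x)) * cis (t * x)) integrable_on {0..2*pi}"
  by (rule integrable_continuous_real) (auto intro!: continuous_intros)

lemma fc_trig:
  fixes m :: int
  shows "fourier_coeff (\<lambda>x. \<Sum>j\<in>{-m..m}. a j * cis (of_int j * x)) k = (if \<bar>k\<bar> \<le> m then a k else 0)"
proof -
  have e: "(\<Sum>j\<in>{-m..m}. a j * cis (of_int j * x)) * cis (- (of_int k * x)) =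
        (\<Sum>j\<in>{-m..m}. a j * cis (of_int (j - k) * x))" for x
  proof -
    have "(\<Sum>j\<in>{-m..m}. a j * cis (of_int j * x)) * cis (- (of_int k * x)) =
        (\<Sum>j\<in>{-m..m}. a j * (cis (of_int j * x) * cis (- (of_int k * x))))"
      by (simp add: sum_distrib_right mult.assoc)
    also have "\<dots> = (\<Sum>j\<in>{-m..m}. a j * cis (of_int (j - k) * x))"
      by (intro sum.cong refl) (simp add: cis_mult algebra_simps)
    finally show ?thesis .
  qed
  have "((\<lambda>x. \<Sum>j\<in>{-m..m}. a j * cis (of_int (j - k) * x)) has_integral
        (\<Sum>j\<in>{-m..m}. a j * (if j - k = 0 then complex_of_real (2 * pi) else 0))) {0..2*pi}"
    by (intro has_integral_sum finite_atLeastAtMost_int has_integral_mult_right cis_has_integral)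
  moreover have "(\<Sum>j\<in>{-m..m}. a j * (if j - k = 0 then complex_of_real (2 * pi) else 0)) =
       (if \<bar>k\<bar> \<le> m then a k * complex_of_real (2 * pi) else 0)"
  proof -
    have "(\<Sum>j\<in>{-m..m}. a j * (if j - k = 0 then complex_of_real (2 * pi) else 0)) =
          (\<Sum>j\<in>{-m..m}. if j = k then a k * complex_of_real (2 * pi) else 0)"
      by (intro sum.cong) auto
    also have "\<dots> = (if k \<in> {-m..m} then a k * complex_of_real (2 * pi) else 0)"
      by (rule sum.delta) simp
    finally show ?thesis by auto
  qed
  ultimately have "integral {0..2*pi} (\<lambda>x. (\<Sum>j\<in>{-m..m}. a j * cis (of_int j * x)) * cis (- (of_int k * x))) =
      (if \<bar>k\<bar> \<le> m then a k * complex_of_real (2 * pi) else 0)"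
    unfolding e by (simp add: integral_unique)
  then show ?thesis by (simp add: fourier_coeff_def)
qed


lemma Lper_fc_int:
  assumes f: "f \<in> Lper"
  shows "(\<lambda>x. f x * cis (- (of_int k * x))) integrable_on {0..2*pi}"
  using Lper_mult_cis_int[OF f, of "- of_int k"] by simp

lemma fc_minus_trig:
  assumes f: "f \<in> Lper"
  shows "fourier_coeff (\<lambda>x. f x - (\<Sum>j\<in>{-m..m}. a j * cis (of_int j * x))) k =
     fourier_coeff f k - (if \<bar>k\<bar> \<le> m then a k else 0)"
proof -
  have "fourier_coeff (\<lambda>x. f x - (\<Sum>j\<in>{-m..m}. a j * cis (of_int j * x))) k =
     fourier_coeff f k - fourier_coeff (\<lambda>x. \<Sum>j\<in>{-m..m}. a j * cis (of_int j * x)) k"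
    by (rule fc_diff[OF Lper_fc_int[OF f]]) (rule integrable_continuous_real, auto intro!: continuous_intros)
  then show ?thesis by (simp add: fc_trig)
qed

lemma best_approx_eq:
  assumes N: "latnorm N \<alpha>" and f: "f \<in> Lper"
  shows "best_approx N n f = N (tailc n (fourier_coeff f))"
proof -
  define c where "c = fourier_coeff f"
  define m where "m = int n - 1"
  have lower: "N (tailc n c) \<le> N (fourier_coeff (\<lambda>x. f x - t x))" if t: "t \<in> trig_polys m" for t
  proof -
    obtain a where a: "\<And>x. t x = (\<Sum>j\<in>{-m..m}. a j * cis (of_int j * x))"
      using t unfolding trig_polys_def by blast
    have teq: "(\<lambda>x. f x - t x) = (\<lambda>x. f x - (\<Sum>j\<in>{-m..m}. a j * cis (of_int j * x)))"
      using a by auto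
    show ?thesis unfolding teq
    proof (rule latnorm_mono[OF N])
      fix k
      show "norm (tailc n c k) \<le> norm (fourier_coeff (\<lambda>x. f x - (\<Sum>j\<in>{-m..m}. a j * cis (of_int j * x))) k)"
        unfolding fc_minus_trig[OF f] by (auto simp: tailc_def c_def m_def)
    qed
  qed
  define t0 where "t0 x = (\<Sum>j\<in>{-m..m}. c j * cis (of_int j * x))" for x
  have t0: "t0 \<in> trig_polys m" unfolding trig_polys_def t0_def by blast
  have t0eq: "fourier_coeff (\<lambda>x. f x - t0 x) = tailc n c"
  proof
    fix k
    show "fourier_coeff (\<lambda>x. f x - t0 x) k = tailc n c k"
      unfolding t0_def fc_minus_trig[OF f] by (auto simp: tailc_def c_def m_def)
  qed
  have "best_approx N n f = Inf {N (fourier_coeff (\<lambda>x. f x - t x)) | t. t \<in> trig_polys m}"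
    by (simp add: best_approx_def m_def)
  also have "\<dots> = N (tailc n c)"
  proof (rule antisym)
    show "Inf {N (fourier_coeff (\<lambda>x. f x - t x)) | t. t \<in> trig_polys m} \<le> N (tailc n c)"
      using t0 t0eq by (intro Inf_lower) (auto intro!: exI[of _ t0])
    show "N (tailc n c) \<le> Inf {N (fourier_coeff (\<lambda>x. f x - t x)) | t. t \<in> trig_polys m}"
      using lower by (intro Inf_greatest) auto
  qed
  finally show ?thesis by (simp add: c_def)
qed


lemma cis_int_2pi: "cis (of_int j * (2 * pi)) = 1"
  by (simp add: cis_conv_exp exp_eq_1 mult.commute)

lemma gk_periodic:
  assumes f: "f \<in> Lper"
  shows "f (x + 2 * pi) * cis (- (of_int k * (x + 2 * pi))) = f x * cis (- (of_int k * x))"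
proof -
  have "f (x + 2 * pi) = f x" using f by (simp add: Lper_def)
  moreover have "cis (- (of_int k * (x + 2 * pi))) = cis (- (of_int k * x)) * cis (of_int (- k) * (2 * pi))"
    by (simp add: cis_mult algebra_simps)
  ultimately show ?thesis by (simp only: cis_int_2pi) simp
qed

lemma shift_has_integral:
  assumes f: "f \<in> Lper"
  shows "((\<lambda>x. f (x - s) * cis (- (of_int k * x))) has_integral
           (cis (- (of_int k * s)) * integral {0..2*pi} (\<lambda>x. f x * cis (- (of_int k * x))))) {0..2*pi}"
    and "((\<lambda>x. norm (f (x - s) * cis (- (of_int k * x)))) has_integral
           integral {0..2*pi} (\<lambda>x. norm (f x * cis (- (of_int k * x))))) {0..2*pi}"
proof -
  define g where "g x = f x * cis (- (of_int k * x))" for x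
  have per: "g (x + 2 * pi) = g x" for x unfolding g_def by (rule gk_periodic[OF f])
  have gi: "g integrable_on {0..2*pi}" unfolding g_def by (rule Lper_fc_int[OF f])
  have ga: "g absolutely_integrable_on {0..2*pi}" unfolding g_def using Lper_mult_cis[OF f, of "- of_int k"] by simp
  then have gn: "(\<lambda>x. norm (g x)) integrable_on {0..2*pi}" by (simp add: absolutely_integrable_on_def)
  have eq: "f (x - s) * cis (- (of_int k * x)) = cis (- (of_int k * s)) * g (x - s)" for x
    by (simp add: g_def cis_mult algebra_simps)
  have "((\<lambda>x. g (x - s)) has_integral integral {0..2*pi} g) {0..2*pi}"
    by (rule periodic_shift_has_integral[OF per integrable_integral[OF gi]])
  then have "((\<lambda>x. cis (- (of_int k * s)) * g (x - s)) has_integral (cis (- (of_int k * s)) * integral {0..2*pi} g)) {0..2*pi}"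
    by (rule has_integral_mult_right)
  then show "((\<lambda>x. f (x - s) * cis (- (of_int k * x))) has_integral
           (cis (- (of_int k * s)) * integral {0..2*pi} (\<lambda>x. f x * cis (- (of_int k * x))))) {0..2*pi}"
    unfolding eq by (simp add: g_def[abs_def])
  have pern: "norm (g (x + 2 * pi)) = norm (g x)" for x using per by simp
  have "((\<lambda>x. norm (g (x - s))) has_integral integral {0..2*pi} (\<lambda>x. norm (g x))) {0..2*pi}"
    by (rule periodic_shift_has_integral[where g = "\<lambda>x. norm (g x)", OF pern integrable_integral[OF gn]])
  then show "((\<lambda>x. norm (f (x - s) * cis (- (of_int k * x)))) has_integral
           integral {0..2*pi} (\<lambda>x. norm (f x * cis (- (of_int k * x))))) {0..2*pi}"
    unfolding eq by (simp add: g_def[abs_def] norm_mult)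
qed

lemma shift_abs_int:
  assumes f: "f \<in> Lper"
  shows "(\<lambda>x. f (x - s) * cis (- (of_int k * x))) absolutely_integrable_on {0..2*pi}"
  unfolding absolutely_integrable_on_def using shift_has_integral[OF f, of s k] by blast


lemma frac_diff_bco: "frac_diff \<alpha> h f x = (\<Sum>j. complex_of_real (bco \<alpha> j) * f (x - real j * h))"
  by (simp add: frac_diff_def bco_def)

lemma fc_frac_diff:
  assumes f: "f \<in> Lper" and a: "\<alpha> > 0"
  shows "fourier_coeff (frac_diff \<alpha> h f) k =
    (\<Sum>j. complex_of_real (bco \<alpha> j) * cis (- (real j * (of_int k * h)))) * fourier_coeff f k"
proof -
  define S where "S = {0..2*pi}"
  define e where "e x = cis (- (of_int k * x))" for x
  define Ig where "Ig = integral S (\<lambda>x. f x * e x)"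
  define Ng where "Ng = integral S (\<lambda>x. norm (f x * e x))"
  define G where "G j x = complex_of_real (bco \<alpha> j) * (f (x - real j * h) * e x)" for j x
  define H where "H j x = indicator S x *\<^sub>R G j x" for j x
  have G_abs: "set_integrable lebesgue S (G j)" for j
    unfolding G_def using shift_abs_int[OF f, of "real j * h" k] by (intro set_integrable_mult_right) (simp add: S_def e_def)
  have G_int: "integral S (G j) = complex_of_real (bco \<alpha> j) * (cis (- (of_int k * (real j * h))) * Ig)" for j
  proof -
    have "((\<lambda>x. f (x - real j * h) * e x) has_integral (cis (- (of_int k * (real j * h))) * Ig)) S"
      using shift_has_integral(1)[OF f, of "real j * h" k] by (simp add: S_def e_def Ig_def)
    then have "(G j has_integral complex_of_real (bco \<alpha> j) * (cis (- (of_int k * (real j * h))) * Ig)) S"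
      unfolding G_def[abs_def] by (rule has_integral_mult_right)
    then show ?thesis by (rule integral_unique)
  qed
  have G_nint: "integral S (\<lambda>x. norm (G j x)) = \<bar>bco \<alpha> j\<bar> * Ng" for j
  proof -
    have "((\<lambda>x. norm (f (x - real j * h) * e x)) has_integral Ng) S"
      using shift_has_integral(2)[OF f, of "real j * h" k] by (simp add: S_def e_def Ng_def)
    then have "((\<lambda>x. \<bar>bco \<alpha> j\<bar> * norm (f (x - real j * h) * e x)) has_integral \<bar>bco \<alpha> j\<bar> * Ng) S"
      by (rule has_integral_mult_right)
    then have "integral S (\<lambda>x. \<bar>bco \<alpha> j\<bar> * norm (f (x - real j * h) * e x)) = \<bar>bco \<alpha> j\<bar> * Ng"
      by (rule integral_unique)
    moreover have "(\<lambda>x. norm (G j x)) = (\<lambda>x. \<bar>bco \<alpha> j\<bar> * norm (f (x - real j * h) * e x))"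
      by (simp add: G_def norm_mult)
    ultimately show ?thesis by simp
  qed
  have H_int: "integrable lebesgue (H j)" for j
    using G_abs[of j] unfolding set_integrable_def H_def by simp
  have H_meas: "H j \<in> borel_measurable lebesgue" for j using H_int by (rule borel_measurable_integrable)
  have H_integral: "integral\<^sup>L lebesgue (H j) = complex_of_real (bco \<alpha> j) * (cis (- (of_int k * (real j * h))) * Ig)" for j
  proof -
    have "integral\<^sup>L lebesgue (H j) = (LINT x:S|lebesgue. G j x)" by (simp add: H_def[abs_def] set_lebesgue_integral_def)
    also have "\<dots> = integral S (G j)" by (rule set_lebesgue_integral_eq_integral(2)[OF G_abs])
    finally show ?thesis using G_int by simp
  qed
  have H_nintegral: "(\<integral>x. norm (H j x) \<partial>lebesgue) = \<bar>bco \<alpha> j\<bar> * Ng" for j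
  proof -
    have "(\<integral>x. norm (H j x) \<partial>lebesgue) = (LINT x:S|lebesgue. norm (G j x))"
      by (simp add: H_def set_lebesgue_integral_def norm_scaleR)
    also have "\<dots> = integral S (\<lambda>x. norm (G j x))"
      by (rule set_lebesgue_integral_eq_integral(2)[OF set_integrable_norm[OF G_abs]])
    finally show ?thesis using G_nint by simp
  qed
  have "(\<lambda>x. f x * e x) absolutely_integrable_on S"
    using Lper_mult_cis[OF f, of "- of_int k"] by (simp add: S_def e_def)
  then have "(\<lambda>x. norm (f x * e x)) integrable_on S" by (simp add: absolutely_integrable_on_def)
  then have Ng0: "0 \<le> Ng" unfolding Ng_def by (rule integral_nonneg) auto
  have sumN: "summable (\<lambda>j. \<bar>bco \<alpha> j\<bar> * Ng)" by (rule summable_mult2[OF summable_abs_bco[OF a]])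
  have AEs: "AE x in lebesgue. summable (\<lambda>j. norm (H j x))"
  proof -
    have "(\<integral>\<^sup>+x. (\<Sum>j. ennreal (norm (H j x))) \<partial>lebesgue) = (\<Sum>j. \<integral>\<^sup>+x. ennreal (norm (H j x)) \<partial>lebesgue)"
      by (rule nn_integral_suminf) (use H_meas in measurable)
    also have "\<dots> = (\<Sum>j. ennreal (\<bar>bco \<alpha> j\<bar> * Ng))"
    proof (rule suminf_cong)
      fix j
      have "(\<integral>\<^sup>+x. ennreal (norm (H j x)) \<partial>lebesgue) = ennreal (\<integral>x. norm (H j x) \<partial>lebesgue)"
        by (rule nn_integral_eq_integral) (auto intro: integrable_norm H_int)
      then show "(\<integral>\<^sup>+x. ennreal (norm (H j x)) \<partial>lebesgue) = ennreal (\<bar>bco \<alpha> j\<bar> * Ng)"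
        using H_nintegral by simp
    qed
    also have "\<dots> = ennreal (\<Sum>j. \<bar>bco \<alpha> j\<bar> * Ng)"
      by (rule suminf_ennreal2[OF _ sumN]) (use Ng0 in auto)
    finally have fin: "(\<integral>\<^sup>+x. (\<Sum>j. ennreal (norm (H j x))) \<partial>lebesgue) \<noteq> \<infinity>" by simp
    have "AE x in lebesgue. (\<Sum>j. ennreal (norm (H j x))) \<noteq> \<infinity>"
      by (rule nn_integral_PInf_AE[OF _ fin]) (use H_meas in measurable)
    then show ?thesis
      by eventually_elim (auto intro: summable_suminf_not_top)
  qed
  have sumI: "summable (\<lambda>j. (\<integral>x. norm (H j x) \<partial>lebesgue))" using sumN H_nintegral by simp
  have int_sum: "integrable lebesgue (\<lambda>x. \<Sum>j. H j x)"
    by (rule integrable_suminf[OF H_int AEs sumI])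
  have integral_sum: "(\<integral>x. (\<Sum>j. H j x) \<partial>lebesgue) = (\<Sum>j. integral\<^sup>L lebesgue (H j))"
    by (rule integral_suminf[OF H_int AEs sumI])
  define FD where "FD x = indicator S x *\<^sub>R (frac_diff \<alpha> h f x * e x)" for x
  have AEeq: "AE x in lebesgue. (\<Sum>j. H j x) = FD x"
    using AEs
  proof eventually_elim
    fix x assume sx: "summable (\<lambda>j. norm (H j x))"
    show "(\<Sum>j. H j x) = FD x"
    proof (cases "x \<in> S")
      case True
      have nG: "norm (G j x) = norm (complex_of_real (bco \<alpha> j) * f (x - real j * h))" for j
        by (simp add: G_def e_def norm_mult)
      have "summable (\<lambda>j. norm (complex_of_real (bco \<alpha> j) * f (x - real j * h)))"
        using sx True by (simp add: H_def nG[symmetric])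
      then have sm: "summable (\<lambda>j. complex_of_real (bco \<alpha> j) * f (x - real j * h))"
        by (rule summable_norm_cancel)
      have "FD x = (\<Sum>j. complex_of_real (bco \<alpha> j) * f (x - real j * h)) * e x"
        using True by (simp add: FD_def frac_diff_bco)
      also have "\<dots> = (\<Sum>j. complex_of_real (bco \<alpha> j) * f (x - real j * h) * e x)"
        by (rule suminf_mult2[OF sm])
      also have "\<dots> = (\<Sum>j. H j x)" using True by (simp add: H_def G_def mult.assoc)
      finally show ?thesis by simp
    next
      case False
      then show ?thesis by (simp add: H_def FD_def)
    qed
  qed
  have FD_meas: "FD \<in> borel_measurable lebesgue"
  proof -
    have fs: "(\<lambda>x. indicator S x *\<^sub>R f (x - s)) \<in> borel_measurable lebesgue" for s
    proof -
      have "set_integrable lebesgue S (\<lambda>x. f (x - s))"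
        using shift_abs_int[OF f, of s 0] by (simp add: S_def)
      then show ?thesis unfolding set_integrable_def by (rule borel_measurable_integrable)
    qed
    have "FD = (\<lambda>x. (\<Sum>j. complex_of_real (bco \<alpha> j) * (indicator S x *\<^sub>R f (x - real j * h))) * e x)"
    proof
      fix x show "FD x = (\<Sum>j. complex_of_real (bco \<alpha> j) * (indicator S x *\<^sub>R f (x - real j * h))) * e x"
        by (cases "x \<in> S") (simp_all add: FD_def frac_diff_bco)
    qed
    moreover have "(\<lambda>x. (\<Sum>j. complex_of_real (bco \<alpha> j) * (indicator S x *\<^sub>R f (x - real j * h))) * e x) \<in> borel_measurable lebesgue"
    proof -
      have m1: "(\<lambda>x. \<Sum>j. complex_of_real (bco \<alpha> j) * (indicator S x *\<^sub>R f (x - real j * h))) \<in> borel_measurable lebesgue"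
        by (rule borel_measurable_suminf, rule borel_measurable_times[OF borel_measurable_const fs])
      have "e \<in> borel_measurable borel" unfolding e_def
        by (intro borel_measurable_continuous_onI continuous_intros)
      then have "e \<in> borel_measurable lborel" by simp
      then have m2: "e \<in> borel_measurable lebesgue" by (rule measurable_completion)
      show ?thesis by (rule borel_measurable_times[OF m1 m2])
    qed
    ultimately show ?thesis by simp
  qed
  have sum_meas: "(\<lambda>x. \<Sum>j. H j x) \<in> borel_measurable lebesgue" using int_sum by (rule borel_measurable_integrable)
  have FD_int: "integrable lebesgue FD"
    using integrable_cong_AE[OF sum_meas FD_meas AEeq] int_sum by simp
  have "(\<integral>x. FD x \<partial>lebesgue) = (\<integral>x. (\<Sum>j. H j x) \<partial>lebesgue)"
    using integral_cong_AE[OF sum_meas FD_meas AEeq] by simp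
  also have "\<dots> = (\<Sum>j. complex_of_real (bco \<alpha> j) * (cis (- (of_int k * (real j * h))) * Ig))"
    unfolding integral_sum H_integral ..
  finally have LI: "(\<integral>x. FD x \<partial>lebesgue) = (\<Sum>j. complex_of_real (bco \<alpha> j) * (cis (- (of_int k * (real j * h))) * Ig))" .
  have "set_integrable lebesgue S (\<lambda>x. frac_diff \<alpha> h f x * e x)"
    using FD_int by (simp add: set_integrable_def FD_def[abs_def])
  from set_lebesgue_integral_eq_integral(2)[OF this]
  have "integral S (\<lambda>x. frac_diff \<alpha> h f x * e x) = (\<Sum>j. complex_of_real (bco \<alpha> j) * (cis (- (of_int k * (real j * h))) * Ig))"
    using LI by (simp add: set_lebesgue_integral_def FD_def[abs_def])
  also have "\<dots> = (\<Sum>j. complex_of_real (bco \<alpha> j) * cis (- (real j * (of_int k * h)))) * Ig"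
  proof -
    have sb: "summable (\<lambda>j. complex_of_real (bco \<alpha> j) * cis (- (real j * (of_int k * h))))"
      by (rule summable_norm_cancel) (use summable_abs_bco[OF a] in \<open>simp add: norm_mult\<close>)
    show ?thesis
      using suminf_mult2[OF sb, of Ig] by (simp add: mult_ac)
  qed
  finally show ?thesis
    by (simp add: fourier_coeff_def S_def e_def Ig_def mult_ac)
qed

theorem theorem4:
  fixes \<alpha> :: real and \<omega> :: "real \<Rightarrow> real" and Ms :: "int \<Rightarrow> real \<Rightarrow> real"
    and N :: "(int \<Rightarrow> complex) \<Rightarrow> ennreal" and f :: "real \<Rightarrow> complex"
  assumes alpha_pos: "\<alpha> > 0"
    and orlicz: "\<And>k. orlicz_function (Ms k)"
    and om_cont: "continuous_on {0..1} \<omega>"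
    and om_mono: "mono_on {0..1} \<omega>"
    and om_nz: "\<And>\<delta>. \<delta> \<in> {0<..1} \<Longrightarrow> \<omega> \<delta> \<noteq> 0"
    and om_lim: "(\<omega> \<longlongrightarrow> 0) (at_right 0)"
    and B_alpha: "(\<lambda>n::nat. \<Sum>v=1..n. real v powr (\<alpha> - 1) * \<omega> (1 / real v))
                    \<in> O(\<lambda>n. real n powr \<alpha> * \<omega> (1 / real n))"
    and norm_choice: "N = lux_norm Ms \<or> N = orlicz_norm Ms"
    and f_in: "f \<in> S_M Ms"
  shows "(\<exists>C. \<forall>\<^sub>F \<delta> in at_right 0. modulus_smooth N \<alpha> f \<delta> \<le> ennreal (C * \<omega> \<delta>))
     \<longleftrightarrow> (\<exists>C. \<forall>\<^sub>F n in sequentially. best_approx N n f \<le> ennreal (C * \<omega> (1 / real n)))"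
proof -
  define c where "c = fourier_coeff f"
  have fL: "f \<in> Lper" using f_in by (simp add: S_M_def)
  have luxfin: "lux_norm Ms c < \<infinity>" using f_in by (simp add: S_M_def c_def)
  have LN: "latnorm N \<alpha>"
    using norm_choice latnorm_lux[OF orlicz alpha_pos] latnorm_orlicz[OF alpha_pos] by auto
  have fin: "N c < \<infinity>"
  proof (cases "N = lux_norm Ms")
    case True then show ?thesis using luxfin by simp
  next
    case False
    then have NO: "N = orlicz_norm Ms" using norm_choice by simp
    have "orlicz_norm Ms c \<le> ennreal 2 * lux_norm Ms c" by (rule orlicz_le_lux[OF orlicz])
    also have "\<dots> < \<infinity>" using luxfin by (simp add: ennreal_mult_less_top)
    finally show ?thesis using NO by simp
  qed
  have mod_eq: "modulus_smooth N \<alpha> f \<delta> = (SUP h\<in>{h. \<bar>h\<bar> \<le> \<delta>}. N (multc \<alpha> h c))" for \<delta>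
    unfolding modulus_smooth_def
  proof (rule SUP_cong[OF refl])
    fix h
    show "N (fourier_coeff (frac_diff \<alpha> h f)) = N (multc \<alpha> h c)"
    proof (rule latnorm_cong[OF LN])
      fix k
      show "norm (fourier_coeff (frac_diff \<alpha> h f) k) = norm (multc \<alpha> h c k)"
        unfolding fc_frac_diff[OF fL alpha_pos] norm_mult mult_series_norm[OF alpha_pos]
        by (simp add: multc_def c_def norm_mult mfun_nonneg)
    qed
  qed
  have ba_eq: "best_approx N n f = N (tailc n c)" for n
    unfolding c_def by (rule best_approx_eq[OF LN fL])
  show ?thesis
    unfolding mod_eq ba_eq
  proof
    assume "\<exists>C. \<forall>\<^sub>F \<delta> in at_right 0. (SUP h\<in>{h. \<bar>h\<bar> \<le> \<delta>}. N (multc \<alpha> h c)) \<le> ennreal (C * \<omega> \<delta>)"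
    then show "\<exists>C. \<forall>\<^sub>F n in sequentially. N (tailc n c) \<le> ennreal (C * \<omega> (1 / real n))"
      by (rule jackson_dir[OF LN])
  next
    assume "\<exists>C. \<forall>\<^sub>F n in sequentially. N (tailc n c) \<le> ennreal (C * \<omega> (1 / real n))"
    then show "\<exists>C. \<forall>\<^sub>F \<delta> in at_right 0. (SUP h\<in>{h. \<bar>h\<bar> \<le> \<delta>}. N (multc \<alpha> h c)) \<le> ennreal (C * \<omega> \<delta>)"
      using bernstein_dir[OF LN alpha_pos om_mono om_nz om_lim B_alpha fin] by blast
  qed
qed

end
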